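(* In the setting described in the context, let $\overline\alpha>0$ be such that $z_{1,\alpha}\ge0$ on $(0,R)$ for every $\alpha\in[0,\overline\alpha]$. Then for every $\alpha\in[0,\overline\alpha]$ and every integer $k\ge1$, $z_{k,\alpha}\le z_{1,\alpha}$ on $(0,R)$, and consequently $\omega_{k,\alpha}\ge\omega_{1,\alpha}$.
   Context: Let $n=2$, $\Omega=\mathbb B(0,R)$, $0<m_0<\kappa$, $r_0^*\in(0,R)$ with $\kappa|\mathbb B(0,r_0^* )|=m_0|\Omega|$, $m_0^*=\kappa\mathds 1_{\mathbb B(0,r_0^* )}$ and $\sigma_\alpha=1+\alpha m_0^*$. Let $\lambda_{0,\alpha}$ be the principal Dirichlet eigenvalue of $u\mapsto-\nabla\cdot(\sigma_\alpha\nabla u)-m_0^*u$ on $\Omega$ and $u_{0,\alpha}$ the nonnegative $L^2$-normalized eigenfunction, which is radial; we write $u_{0,\alpha}(r)$ for its profile. For $f$ defined near $r_0^*$, $f|_{int}(r_0^* )$, $f|_{ext}(r_0^* )$ denote the one-sided limits from $r<r_0^*$ and $r>r_0^*$, and $[\![f]\!]=f|_{ext}-f|_{int}$. For $k\ge1$, $z_{k,\alpha}:[0,R]\to\mathbb{R}$ is the solution of $-\sigma_\alpha z''-\frac{\sigma_\alpha}{r}z'=(\lambda_{0,\alpha}-\frac{k^2}{r^2})z+m_0^*z$ on $(0,r_0^* )\cup(r_0^*,R)$, with $[\![\sigma_\alpha z']\!](r_0^* )=-\kappa u_{0,\alpha}(r_0^* )$, $[\![z]\!](r_0^* )=-[\![\partial_ru_{0,\alpha}]\!](r_0^*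 )$, $z(0)=0$, $z(R)=0$. Define $\omega_{k,\alpha}=\frac{r_0^*\kappa u_{0,\alpha}(r_0^* )}{2}\big(-\partial_ru_{0,\alpha}|_{int}(r_0^* )-z_{k,\alpha}|_{int}(r_0^* )\big)$. *)

theory Defs
  imports "HOL-Analysis.Analysis"
begin

text \<open>Radial setting, n = 2, Omega = B(0,R), B(0,r0) the inner disk.
  All objects are written in the radial variable r.\<close>

definition sigma :: "real \<Rightarrow> real \<Rightarrow> real \<Rightarrow> real \<Rightarrow> real" where
  "sigma \<kappa> r0 \<alpha> r = (if r < r0 then 1 + \<alpha> * \<kappa> else 1)"

definition mstar :: "real \<Rightarrow> real \<Rightarrow> real \<Rightarrow> real" where
  "mstar \<kappa> r0 r = (if r < r0 then \<kappa> else 0)"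

definition lim_int :: "(real \<Rightarrow> real) \<Rightarrow> real \<Rightarrow> real" where
  "lim_int f x = Lim (at_left x) f"

definition lim_ext :: "(real \<Rightarrow> real) \<Rightarrow> real \<Rightarrow> real" where
  "lim_ext f x = Lim (at_right x) f"

definition has_one_sided_limits :: "(real \<Rightarrow> real) \<Rightarrow> real \<Rightarrow> bool" where
  "has_one_sided_limits f x \<longleftrightarrow>
     (\<exists>l. (f \<longlongrightarrow> l) (at_left x)) \<and> (\<exists>l. (f \<longlongrightarrow> l) (at_right x))"

definition radial_eq ::
  "real \<Rightarrow> real \<Rightarrow> real \<Rightarrow> real \<Rightarrow> real \<Rightarrow> (real \<Rightarrow> real) \<Rightarrow> real \<Rightarrow> bool" where
  "radial_eq \<kappa> r0 \<alpha> lam c f r \<longleftrightarrow>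
     (f has_real_derivative deriv f r) (at r) \<and>
     (deriv f has_real_derivative deriv (deriv f) r) (at r) \<and>
     - sigma \<kappa> r0 \<alpha> r * deriv (deriv f) r - sigma \<kappa> r0 \<alpha> r * deriv f r / r
       = (lam - c / r\<^sup>2) * f r + mstar \<kappa> r0 r * f r"

text \<open>(lam, u) is the principal Dirichlet eigenpair of
  u \<mapsto> -div(sigma_alpha grad u) - m0* u on B(0,R), u the nonnegative
  L2-normalized eigenfunction, written through its radial profile.
  Principality is encoded by the nonnegativity of the (nontrivial) eigenfunction.\<close>
definition principal_radial_eigenpair ::
  "real \<Rightarrow> real \<Rightarrow> real \<Rightarrow> real \<Rightarrow> real \<Rightarrow> (real \<Rightarrow> real) \<Rightarrow> bool" where
  "principal_radial_eigenpair \<kappa> r0 R \<alpha> lam u \<longleftrightarrow>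
     continuous_on {0..R} u \<and>
     (\<forall>r \<in> {0<..<r0} \<union> {r0<..<R}. radial_eq \<kappa> r0 \<alpha> lam 0 u r) \<and>
     (u has_real_derivative 0) (at 0 within {0..R}) \<and>
     has_one_sided_limits (deriv u) r0 \<and>
     (1 + \<alpha> * \<kappa>) * lim_int (deriv u) r0 = lim_ext (deriv u) r0 \<and>
     u R = 0 \<and>
     (\<forall>r \<in> {0..R}. 0 \<le> u r) \<and>
     2 * pi * integral {0..R} (\<lambda>r. r * (u r)\<^sup>2) = 1"

definition z_problem ::
  "real \<Rightarrow> real \<Rightarrow> real \<Rightarrow> real \<Rightarrow> real \<Rightarrow> (real \<Rightarrow> real) \<Rightarrow> nat \<Rightarrow> (real \<Rightarrow> real) \<Rightarrow> bool" where
  "z_problem \<kappa> r0 R \<alpha> lam u k z \<longleftrightarrow>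
     (\<forall>r \<in> {0<..<r0} \<union> {r0<..<R}. radial_eq \<kappa> r0 \<alpha> lam (real k ^ 2) z r) \<and>
     has_one_sided_limits z r0 \<and>
     has_one_sided_limits (deriv z) r0 \<and>
     lim_ext (deriv z) r0 - (1 + \<alpha> * \<kappa>) * lim_int (deriv z) r0 = - \<kappa> * u r0 \<and>
     lim_ext z r0 - lim_int z r0 = - (lim_ext (deriv u) r0 - lim_int (deriv u) r0) \<and>
     z 0 = 0 \<and> (z \<longlongrightarrow> 0) (at_right 0) \<and>
     z R = 0 \<and> (z \<longlongrightarrow> 0) (at_left R)"

definition omega :: "real \<Rightarrow> real \<Rightarrow> (real \<Rightarrow> real) \<Rightarrow> (real \<Rightarrow> real) \<Rightarrow> real" where
  "omega \<kappa> r0 u z = r0 * \<kappa> * u r0 / 2 * (- lim_int (deriv u) r0 - lim_int z r0)"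

end

theory Submission
  imports Defs
begin

lemma dec_except:
  fixes g g' :: "real \<Rightarrow> real"
  assumes "x < y" "continuous_on {x..y} g"
    and D: "\<And>t. x < t \<Longrightarrow> t < y \<Longrightarrow> t \<noteq> p \<Longrightarrow> (g has_real_derivative g' t) (at t) \<and> g' t < 0"
  shows "g y < g x"
proof (cases "x < p \<and> p < y")
  case True
  have "g p < g x"
  proof (rule DERIV_neg_imp_decreasing_open[of x p g])
    show "continuous_on {x..p} g" using assms True by (auto intro: continuous_on_subset)
    fix t assume "x < t" "t < p"
    then show "\<exists>y. (g has_real_derivative y) (at t) \<and> y < 0" using D[of t] True by auto
  qed (use True in auto)
  moreover have "g y < g p"
  proof (rule DERIV_neg_imp_decreasing_open[of p y g])
    show "continuous_on {p..y} g" using assms True by (auto intro: continuous_on_subset)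
    fix t assume "p < t" "t < y"
    then show "\<exists>y. (g has_real_derivative y) (at t) \<and> y < 0" using D[of t] True by auto
  qed (use True in auto)
  ultimately show ?thesis by simp
next
  case False
  show ?thesis
  proof (rule DERIV_neg_imp_decreasing_open[of x y g])
    show "continuous_on {x..y} g" using assms by auto
    fix t assume "x < t" "t < y"
    then show "\<exists>y. (g has_real_derivative y) (at t) \<and> y < 0" using D[of t] False by auto
  qed (use assms in auto)
qed

lemma inc_except:
  fixes g g' :: "real \<Rightarrow> real"
  assumes "x < y" "continuous_on {x..y} g"
    and "\<And>t. x < t \<Longrightarrow> t < y \<Longrightarrow> t \<noteq> p \<Longrightarrow> (g has_real_derivative g' t) (at t) \<and> g' t > 0"
  shows "g x < g y"
proof -
  have "(\<lambda>t. - g t) y < (\<lambda>t. - g t) x"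
    by (rule dec_except[where g'="\<lambda>t. - g' t" and p=p])
       (use assms in \<open>auto intro: continuous_on_minus DERIV_minus\<close>)
  then show ?thesis by simp
qed

lemma gronwall_energy:
  fixes f df ddf :: "real \<Rightarrow> real"
  assumes "C \<ge> 0"
    and d1: "\<And>t. t \<in> {p..q} \<Longrightarrow> (f has_real_derivative df t) (at t)"
    and d2: "\<And>t. t \<in> {p..q} \<Longrightarrow> (df has_real_derivative ddf t) (at t)"
    and bd: "\<And>t. t \<in> {p..q} \<Longrightarrow> \<bar>ddf t\<bar> \<le> C * (\<bar>f t\<bar> + \<bar>df t\<bar>)"
    and st: "s \<in> {p..q}" "t \<in> {p..q}"
  shows "(f t)\<^sup>2 + (df t)\<^sup>2 \<le> ((f s)\<^sup>2 + (df s)\<^sup>2) * exp ((1 + 3*C) * \<bar>t - s\<bar>)"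
proof -
  define K where "K = 1 + 3*C"
  define E where "E x = (f x)\<^sup>2 + (df x)\<^sup>2" for x
  define E' where "E' x = 2 * f x * df x + 2 * df x * ddf x" for x
  have dE: "(E has_real_derivative E' x) (at x)" if "x \<in> {p..q}" for x
    unfolding E_def E'_def
    by (auto intro!: derivative_eq_intros d1[OF that] d2[OF that])
  have bE: "\<bar>E' x\<bar> \<le> K * E x" if "x \<in> {p..q}" for x
  proof -
    define P where "P = \<bar>f x\<bar> * \<bar>df x\<bar>"
    define Q where "Q = \<bar>df x\<bar> * \<bar>ddf x\<bar>"
    define A where "A = (f x)\<^sup>2"
    define B where "B = (df x)\<^sup>2"
    have a: "2 * P \<le> A + B"
      using sum_squares_bound[of "\<bar>f x\<bar>" "\<bar>df x\<bar>"] by (simp add: power2_eq_square P_def A_def B_def)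
    have b0: "\<bar>df x\<bar> * \<bar>ddf x\<bar> \<le> \<bar>df x\<bar> * (C * (\<bar>f x\<bar> + \<bar>df x\<bar>))"
      by (rule mult_left_mono[OF bd[OF that] abs_ge_zero])
    have b: "Q \<le> C * B + C * P"
      using b0 by (simp add: Q_def B_def P_def algebra_simps power2_eq_square)
    have c0: "\<bar>E' x\<bar> \<le> \<bar>2 * f x * df x\<bar> + \<bar>2 * df x * ddf x\<bar>" unfolding E'_def by (rule abs_triangle_ineq)
    have c: "\<bar>E' x\<bar> \<le> 2 * P + 2 * Q"
      using c0 by (simp add: abs_mult P_def Q_def)
    have d: "C * (2 * P) \<le> C * (A + B)"
      by (rule mult_left_mono[OF a \<open>C \<ge> 0\<close>])
    have e: "C * A \<ge> 0" using \<open>C \<ge> 0\<close> by (simp add: A_def)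
    have f: "C * B \<ge> 0" using \<open>C \<ge> 0\<close> by (simp add: B_def)
    have "\<bar>E' x\<bar> \<le> (A + B) + 3 * (C * A) + 3 * (C * B)"
      using a b c d e f by (simp add: algebra_simps)
    then show ?thesis unfolding K_def E_def A_def B_def by (simp add: algebra_simps)
  qed
  show ?thesis
  proof (cases "s \<le> t")
    case True
    define h where "h x = E x * exp (- K * x)" for x
    have "h t \<le> h s"
    proof (rule DERIV_nonpos_imp_nonincreasing[OF True])
      fix x assume x: "s \<le> x" "x \<le> t"
      then have xin: "x \<in> {p..q}" using st by auto
      have "(h has_real_derivative (E' x - K * E x) * exp (- K * x)) (at x)"
        unfolding h_def by (auto intro!: derivative_eq_intros dE[OF xin] simp: algebra_simps)
      moreover have "(E' x - K * E x) * exp (- K * x) \<le> 0"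
        using bE[OF xin] by (intro mult_nonpos_nonneg) auto
      ultimately show "\<exists>y. (h has_real_derivative y) (at x) \<and> y \<le> 0" by blast
    qed
    then have "E t * exp (- K * t) * exp (K * t) \<le> E s * exp (- K * s) * exp (K * t)"
      unfolding h_def by (intro mult_right_mono) auto
    then have "E t \<le> E s * exp (K * (t - s))"
      by (simp add: mult.assoc exp_add[symmetric] algebra_simps)
    then show ?thesis using True unfolding E_def K_def by simp
  next
    case False
    define h where "h x = E x * exp (K * x)" for x
    have ts: "t \<le> s" using False by simp
    have "h t \<le> h s"
    proof (rule DERIV_nonneg_imp_nondecreasing[OF ts])
      fix x assume x: "t \<le> x" "x \<le> s"
      then have xin: "x \<in> {p..q}" using st by auto
      have "(h has_real_derivative (E' x + K * E x) * exp (K * x)) (at x)"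
        unfolding h_def by (auto intro!: derivative_eq_intros dE[OF xin] simp: algebra_simps)
      moreover have "(E' x + K * E x) * exp (K * x) \<ge> 0"
        using bE[OF xin] by (intro mult_nonneg_nonneg) auto
      ultimately show "\<exists>y. (h has_real_derivative y) (at x) \<and> y \<ge> 0" by blast
    qed
    then have "E t * exp (K * t) * exp (- K * t) \<le> E s * exp (K * s) * exp (- K * t)"
      unfolding h_def by (intro mult_right_mono) auto
    then have "E t \<le> E s * exp (K * (s - t))"
      by (simp add: mult.assoc exp_add[symmetric] algebra_simps)
    then show ?thesis using False unfolding E_def K_def by simp
  qed
qed



lemma piece_bound:
  fixes f df ddf :: "real \<Rightarrow> real"
  assumes "0 < a" "a \<le> r" "ddf r = - df r / r - \<beta> * f r"
  shows "\<bar>ddf r\<bar> \<le> (1/a + \<bar>\<beta>\<bar>) * (\<bar>f r\<bar> + \<bar>df r\<bar>)"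
proof -
  have r: "r > 0" using assms by simp
  have "\<bar>ddf r\<bar> \<le> \<bar>- df r / r\<bar> + \<bar>\<beta> * f r\<bar>"
    unfolding assms(3) by (rule abs_triangle_ineq4)
  also have "\<bar>- df r / r\<bar> = \<bar>df r\<bar> / r" using r by (simp add: abs_divide)
  also have "\<bar>\<beta> * f r\<bar> = \<bar>\<beta>\<bar> * \<bar>f r\<bar>" by (simp add: abs_mult)
  finally have "\<bar>ddf r\<bar> \<le> \<bar>df r\<bar> / r + \<bar>\<beta>\<bar> * \<bar>f r\<bar>" .
  moreover have "\<bar>df r\<bar> / r \<le> \<bar>df r\<bar> / a"
    using assms by (intro divide_left_mono) auto
  moreover have "(1/a + \<bar>\<beta>\<bar>) * (\<bar>f r\<bar> + \<bar>df r\<bar>) = \<bar>f r\<bar>/a + \<bar>df r\<bar>/a + \<bar>\<beta>\<bar> * \<bar>f r\<bar> + \<bar>\<beta>\<bar> * \<bar>df r\<bar>"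
    by (simp add: algebra_simps)
  moreover have "\<bar>f r\<bar>/a \<ge> 0" "\<bar>\<beta>\<bar> * \<bar>df r\<bar> \<ge> 0" using assms by auto
  ultimately show ?thesis by linarith
qed

lemma piece_gronwall:
  fixes f df ddf :: "real \<Rightarrow> real"
  assumes a: "0 < a" "a \<le> p"
    and ode: "\<And>r. r \<in> {p..q} \<Longrightarrow> (f has_real_derivative df r) (at r) \<and>
        (df has_real_derivative ddf r) (at r) \<and> ddf r = - df r / r - \<beta> * f r"
    and st: "s \<in> {p..q}" "t \<in> {p..q}"
  shows "(f t)\<^sup>2 + (df t)\<^sup>2 \<le> ((f s)\<^sup>2 + (df s)\<^sup>2) * exp ((1 + 3*(1/a + \<bar>\<beta>\<bar>)) * \<bar>t - s\<bar>)"
proof (rule gronwall_energy[where ddf=ddf and p=p and q=q])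
  show "0 \<le> 1/a + \<bar>\<beta>\<bar>" using a by simp
  fix r assume r: "r \<in> {p..q}"
  show "(f has_real_derivative df r) (at r)" "(df has_real_derivative ddf r) (at r)" using ode[OF r] by auto
  show "\<bar>ddf r\<bar> \<le> (1/a + \<bar>\<beta>\<bar>) * (\<bar>f r\<bar> + \<bar>df r\<bar>)"
    by (rule piece_bound) (use a r ode[OF r] in auto)
qed (use st in auto)

lemma sq_sum_zero: "(x::real)\<^sup>2 + y\<^sup>2 \<le> 0 \<Longrightarrow> x = 0 \<and> y = 0"
proof -
  assume a: "x\<^sup>2 + y\<^sup>2 \<le> 0"
  have "x\<^sup>2 \<ge> 0" "y\<^sup>2 \<ge> 0" by auto
  then have "x\<^sup>2 = 0" "y\<^sup>2 = 0" using a by linarith+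
  then show ?thesis by simp
qed

lemma piece_zero_interior:
  fixes f df ddf :: "real \<Rightarrow> real"
  assumes A: "0 \<le> A"
    and ode: "\<And>r. r \<in> {A<..<B} \<Longrightarrow> (f has_real_derivative df r) (at r) \<and>
        (df has_real_derivative ddf r) (at r) \<and> ddf r = - df r / r - \<beta> * f r"
    and tz: "tz \<in> {A<..<B}" "f tz = 0" "df tz = 0"
    and t: "t \<in> {A<..<B}"
  shows "f t = 0"
proof -
  define p where "p = min t tz"
  define q where "q = max t tz"
  have "p > 0" using A t tz by (auto simp: p_def)
  have "(f t)\<^sup>2 + (df t)\<^sup>2 \<le> ((f tz)\<^sup>2 + (df tz)\<^sup>2) * exp ((1 + 3*(1/p + \<bar>\<beta>\<bar>)) * \<bar>t - tz\<bar>)"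
    proof (rule piece_gronwall[where p=p and q=q and ddf=ddf])
      fix r assume "r \<in> {p..q}"
      then have "r \<in> {A<..<B}" using t tz by (auto simp: p_def q_def)
      then show "(f has_real_derivative df r) (at r) \<and> (df has_real_derivative ddf r) (at r) \<and> ddf r = - df r / r - \<beta> * f r"
        by (rule ode)
    qed (use \<open>p > 0\<close> in \<open>auto simp: p_def q_def\<close>)
  then show ?thesis using tz sq_sum_zero by simp
qed

lemma piece_zero_right_end:
  fixes f df ddf :: "real \<Rightarrow> real"
  assumes A: "0 \<le> A"
    and ode: "\<And>r. r \<in> {A<..<B} \<Longrightarrow> (f has_real_derivative df r) (at r) \<and>
        (df has_real_derivative ddf r) (at r) \<and> ddf r = - df r / r - \<beta> * f r"
    and lim: "(f \<longlongrightarrow> 0) (at_left B)" "(df \<longlongrightarrow> 0) (at_left B)"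
    and t: "t \<in> {A<..<B}"
  shows "f t = 0"
proof -
  define K where "K = 1 + 3*(1/t + \<bar>\<beta>\<bar>)"
  have tpos: "t > 0" using A t by auto
  have K: "K \<ge> 0" using tpos by (simp add: K_def)
  have ev: "eventually (\<lambda>s. (f t)\<^sup>2 + (df t)\<^sup>2 \<le> ((f s)\<^sup>2 + (df s)\<^sup>2) * exp (K * (B - t))) (at_left B)"
  proof (rule eventually_mono)
    show "eventually (\<lambda>s. s \<in> {t<..<B}) (at_left B)" using t by (intro eventually_at_left_real) auto
  next
    fix s assume s: "s \<in> {t<..<B}"
    have "(f t)\<^sup>2 + (df t)\<^sup>2 \<le> ((f s)\<^sup>2 + (df s)\<^sup>2) * exp (K * \<bar>t - s\<bar>)"
      unfolding K_def
      proof (rule piece_gronwall[where p=t and q=s and ddf=ddf])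
        fix r assume "r \<in> {t..s}"
        then have "r \<in> {A<..<B}" using t s by auto
        then show "(f has_real_derivative df r) (at r) \<and> (df has_real_derivative ddf r) (at r) \<and> ddf r = - df r / r - \<beta> * f r"
          by (rule ode)
      qed (use tpos s in auto)
    also have "\<dots> \<le> ((f s)\<^sup>2 + (df s)\<^sup>2) * exp (K * (B - t))"
      using s K by (intro mult_left_mono) (auto intro!: mult_left_mono)
    finally show "(f t)\<^sup>2 + (df t)\<^sup>2 \<le> ((f s)\<^sup>2 + (df s)\<^sup>2) * exp (K * (B - t))" .
  qed
  have "((\<lambda>s. ((f s)\<^sup>2 + (df s)\<^sup>2) * exp (K * (B - t))) \<longlongrightarrow> (0\<^sup>2 + 0\<^sup>2) * exp (K * (B - t))) (at_left B)"
    by (intro tendsto_intros lim)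
  then have "(f t)\<^sup>2 + (df t)\<^sup>2 \<le> 0"
    using tendsto_le[OF trivial_limit_at_left_real _ tendsto_const ev] by simp
  then show ?thesis using sq_sum_zero by blast
qed

lemma piece_zero_left_end:
  fixes f df ddf :: "real \<Rightarrow> real"
  assumes A: "0 < A"
    and ode: "\<And>r. r \<in> {A<..<B} \<Longrightarrow> (f has_real_derivative df r) (at r) \<and>
        (df has_real_derivative ddf r) (at r) \<and> ddf r = - df r / r - \<beta> * f r"
    and lim: "(f \<longlongrightarrow> 0) (at_right A)" "(df \<longlongrightarrow> 0) (at_right A)"
    and t: "t \<in> {A<..<B}"
  shows "f t = 0"
proof -
  define K where "K = 1 + 3*(1/A + \<bar>\<beta>\<bar>)"
  have K: "K \<ge> 0" using A by (simp add: K_def)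
  have ev: "eventually (\<lambda>s. (f t)\<^sup>2 + (df t)\<^sup>2 \<le> ((f s)\<^sup>2 + (df s)\<^sup>2) * exp (K * (t - A))) (at_right A)"
  proof (rule eventually_mono)
    show "eventually (\<lambda>s. s \<in> {A<..<t}) (at_right A)" using t by (intro eventually_at_right_real) auto
  next
    fix s assume s: "s \<in> {A<..<t}"
    have "(f t)\<^sup>2 + (df t)\<^sup>2 \<le> ((f s)\<^sup>2 + (df s)\<^sup>2) * exp (K * \<bar>t - s\<bar>)"
      unfolding K_def
      proof (rule piece_gronwall[where p=s and q=t and ddf=ddf])
        fix r assume "r \<in> {s..t}"
        then have "r \<in> {A<..<B}" using t s by auto
        then show "(f has_real_derivative df r) (at r) \<and> (df has_real_derivative ddf r) (at r) \<and> ddf r = - df r / r - \<beta> * f r"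
          by (rule ode)
      qed (use A s in auto)
    also have "\<dots> \<le> ((f s)\<^sup>2 + (df s)\<^sup>2) * exp (K * (t - A))"
      using s K by (intro mult_left_mono) (auto intro!: mult_left_mono)
    finally show "(f t)\<^sup>2 + (df t)\<^sup>2 \<le> ((f s)\<^sup>2 + (df s)\<^sup>2) * exp (K * (t - A))" .
  qed
  have "((\<lambda>s. ((f s)\<^sup>2 + (df s)\<^sup>2) * exp (K * (t - A))) \<longlongrightarrow> (0\<^sup>2 + 0\<^sup>2) * exp (K * (t - A))) (at_right A)"
    by (intro tendsto_intros lim)
  then have "(f t)\<^sup>2 + (df t)\<^sup>2 \<le> 0"
    using tendsto_le[OF trivial_limit_at_right_real _ tendsto_const ev] by simp
  then show ?thesis using sq_sum_zero by blast
qed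

lemma radial_eq_form:
  assumes "radial_eq \<kappa> r0 \<alpha> lam c f r" "r > 0"
  shows "sigma \<kappa> r0 \<alpha> r * (r * deriv (deriv f) r + deriv f r)
           = - (lam + mstar \<kappa> r0 r) * r * f r + c * f r / r"
proof -
  have e: "- sigma \<kappa> r0 \<alpha> r * deriv (deriv f) r - sigma \<kappa> r0 \<alpha> r * deriv f r / r
       = (lam - c / r\<^sup>2) * f r + mstar \<kappa> r0 r * f r"
    using assms(1) unfolding radial_eq_def by blast
  have r: "r \<noteq> 0" using assms(2) by simp
  have "sigma \<kappa> r0 \<alpha> r * (r * deriv (deriv f) r + deriv f r)
      = - r * (- sigma \<kappa> r0 \<alpha> r * deriv (deriv f) r - sigma \<kappa> r0 \<alpha> r * deriv f r / r)"
    using r by (simp add: field_simps)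
  also have "\<dots> = - r * ((lam - c / r\<^sup>2) * f r + mstar \<kappa> r0 r * f r)" using e by simp
  also have "\<dots> = - (lam + mstar \<kappa> r0 r) * r * f r + c * f r / r"
    using r by (simp add: field_simps power2_eq_square)
  finally show ?thesis .
qed



locale setting =
  fixes \<kappa> r0 R \<alpha> L :: real and U Z1 ZK :: "real \<Rightarrow> real" and k :: nat
  assumes kap: "0 < \<kappa>" and r0pos: "0 < r0" and r0R: "r0 < R" and alpha: "0 \<le> \<alpha>" and kge: "1 \<le> k"
    and eig: "principal_radial_eigenpair \<kappa> r0 R \<alpha> L U"
    and zp1: "z_problem \<kappa> r0 R \<alpha> L U 1 Z1" and zpk: "z_problem \<kappa> r0 R \<alpha> L U k ZK"
    and z1nn: "\<forall>r\<in>{0<..<R}-{r0}. 0 \<le> Z1 r"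
begin

definition s1 where "s1 = 1 + \<alpha> * \<kappa>"

lemma s1pos: "s1 > 0"
  using alpha kap unfolding s1_def by (simp add: add_pos_nonneg)

lemma sig1: "r < r0 \<Longrightarrow> sigma \<kappa> r0 \<alpha> r = s1"
  and sig2: "\<not> r < r0 \<Longrightarrow> sigma \<kappa> r0 \<alpha> r = 1"
  and m1: "r < r0 \<Longrightarrow> mstar \<kappa> r0 r = \<kappa>"
  and m2: "\<not> r < r0 \<Longrightarrow> mstar \<kappa> r0 r = 0"
  by (auto simp: sigma_def mstar_def s1_def)

lemma U_cont: "continuous_on {0..R} U"
  and U_nn: "r \<in> {0..R} \<Longrightarrow> 0 \<le> U r"
  and U_R: "U R = 0"
  and U_int: "2 * pi * integral {0..R} (\<lambda>r. r * (U r)\<^sup>2) = 1"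
  and U_rad: "r \<in> {0<..<r0} \<union> {r0<..<R} \<Longrightarrow> radial_eq \<kappa> r0 \<alpha> L 0 U r"
  and U_osl: "has_one_sided_limits (deriv U) r0"
  and U_jump: "(1 + \<alpha> * \<kappa>) * lim_int (deriv U) r0 = lim_ext (deriv U) r0"
  using eig unfolding principal_radial_eigenpair_def by auto

lemma ode_piece1:
  assumes "radial_eq \<kappa> r0 \<alpha> L c f r" "r \<in> {0<..<r0}"
  shows "(f has_real_derivative deriv f r) (at r) \<and> (deriv f has_real_derivative deriv (deriv f) r) (at r)
    \<and> deriv (deriv f) r = - deriv f r / r - ((L + \<kappa>) / s1 - c / (s1 * r\<^sup>2)) * f r"
proof -
  have r: "r > 0" "r < r0" using assms by auto
  have e: "s1 * (r * deriv (deriv f) r + deriv f r) = - (L + \<kappa>) * r * f r + c * f r / r"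
    using radial_eq_form[OF assms(1) r(1)] sig1[OF r(2)] m1[OF r(2)] by simp
  define Y where "Y = - deriv f r / r - ((L + \<kappa>) / s1 - c / (s1 * r\<^sup>2)) * f r"
  have "s1 * r * (deriv (deriv f) r - Y) = s1 * (r * deriv (deriv f) r + deriv f r) - (- (L + \<kappa>) * r * f r + c * f r / r)"
    using r s1pos unfolding Y_def by (simp add: field_simps power2_eq_square)
  also have "\<dots> = 0" using e by simp
  finally have "deriv (deriv f) r = Y" using r s1pos by simp
  then have "deriv (deriv f) r = - deriv f r / r - ((L + \<kappa>) / s1 - c / (s1 * r\<^sup>2)) * f r"
    unfolding Y_def .
  then show ?thesis using assms(1) unfolding radial_eq_def by blast
qed

lemma ode_piece2:
  assumes "radial_eq \<kappa> r0 \<alpha> L c f r" "r \<in> {r0<..<R}"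
  shows "(f has_real_derivative deriv f r) (at r) \<and> (deriv f has_real_derivative deriv (deriv f) r) (at r)
    \<and> deriv (deriv f) r = - deriv f r / r - (L - c / r\<^sup>2) * f r"
proof -
  have r: "r > 0" "\<not> r < r0" using assms r0pos by auto
  have e: "(r * deriv (deriv f) r + deriv f r) = - L * r * f r + c * f r / r"
    using radial_eq_form[OF assms(1) r(1)] sig2[OF r(2)] m2[OF r(2)] by simp
  define Y where "Y = - deriv f r / r - (L - c / r\<^sup>2) * f r"
  have "r * (deriv (deriv f) r - Y) = (r * deriv (deriv f) r + deriv f r) - (- L * r * f r + c * f r / r)"
    using r unfolding Y_def by (simp add: field_simps power2_eq_square)
  also have "\<dots> = 0" using e by simp
  finally have "deriv (deriv f) r = Y" using r by simp
  then have "deriv (deriv f) r = - deriv f r / r - (L - c / r\<^sup>2) * f r"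
    unfolding Y_def .
  then show ?thesis using assms(1) unfolding radial_eq_def by blast
qed

lemma U_ode1: "r \<in> {0<..<r0} \<Longrightarrow> (U has_real_derivative deriv U r) (at r) \<and>
   (deriv U has_real_derivative deriv (deriv U) r) (at r) \<and>
   deriv (deriv U) r = - deriv U r / r - ((L + \<kappa>) / s1) * U r"
proof -
  assume r: "r \<in> {0<..<r0}"
  then have "radial_eq \<kappa> r0 \<alpha> L 0 U r" by (intro U_rad) auto
  from ode_piece1[OF this r, unfolded div_0 diff_zero] show ?thesis .
qed

lemma U_ode2: "r \<in> {r0<..<R} \<Longrightarrow> (U has_real_derivative deriv U r) (at r) \<and>
   (deriv U has_real_derivative deriv (deriv U) r) (at r) \<and>
   deriv (deriv U) r = - deriv U r / r - L * U r"
proof -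
  assume r: "r \<in> {r0<..<R}"
  then have "radial_eq \<kappa> r0 \<alpha> L 0 U r" by (intro U_rad) auto
  from ode_piece2[OF this r, unfolded div_0 diff_zero] show ?thesis .
qed

lemma U_isCont: "r \<in> {0<..<R} \<Longrightarrow> isCont U r"
  by (rule continuous_on_interior[OF U_cont]) auto

lemma U_left_r0: "(U \<longlongrightarrow> U r0) (at_left r0)" and U_right_r0: "(U \<longlongrightarrow> U r0) (at_right r0)"
  using U_isCont[of r0] r0pos r0R unfolding isCont_def filterlim_at_split by auto

lemma dU_left: "(deriv U \<longlongrightarrow> lim_int (deriv U) r0) (at_left r0)"
  and dU_right: "(deriv U \<longlongrightarrow> lim_ext (deriv U) r0) (at_right r0)"
  using U_osl unfolding has_one_sided_limits_def lim_int_def lim_ext_def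
  by (auto intro: tendsto_Lim[symmetric, THEN subst, where P="\<lambda>l. (_ \<longlongrightarrow> l) _"] simp: tendsto_Lim)

lemma U_zero_False:
  assumes "\<forall>t\<in>{0<..<r0}. U t = 0" "\<forall>t\<in>{r0<..<R}. U t = 0"
  shows False
proof -
  have "integral {0..R} (\<lambda>r. r * (U r)\<^sup>2) = integral {0..R} (\<lambda>r. 0::real)"
  proof (rule integral_spike[of "{0, r0, R}"])
    show "negligible {0, r0, R}" by auto
    fix x assume "x \<in> {0..R} - {0, r0, R}"
    then have "x \<in> {0<..<r0} \<or> x \<in> {r0<..<R}" by auto
    then show "0 = x * (U x)\<^sup>2" using assms by auto
  qed
  then show False using U_int by simp
qed

end



context setting begin

lemma U_r0_pos: "U r0 > 0"
proof (rule ccontr)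
  assume "\<not> U r0 > 0"
  then have U0: "U r0 = 0" using U_nn[of r0] r0pos r0R by auto
  define Li where "Li = lim_int (deriv U) r0"
  define Le where "Le = lim_ext (deriv U) r0"
  have Li: "Li \<le> 0"
  proof (rule ccontr)
    assume "\<not> Li \<le> 0"
    then have "eventually (\<lambda>x. 0 < deriv U x) (at_left r0)"
      using order_tendstoD(1)[OF dU_left[folded Li_def]] by auto
    then obtain b where b: "b < r0" "\<And>y. b < y \<Longrightarrow> y < r0 \<Longrightarrow> 0 < deriv U y"
      unfolding eventually_at_left_field by auto
    define a where "a = max b (r0/2)"
    have a: "0 < a" "a < r0" "b \<le> a" using b r0pos by (auto simp: a_def)
    have "U a < U r0"
    proof (rule DERIV_pos_imp_increasing_open[OF a(2)])
      fix x assume x: "a < x" "x < r0"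
      then have xi: "x \<in> {0<..<r0}" using a by auto
      have "(U has_real_derivative deriv U x) (at x)" using U_ode1[OF xi] by blast
      moreover have "deriv U x > 0" using b(2)[of x] x a by auto
      ultimately show "\<exists>y. (U has_real_derivative y) (at x) \<and> y > 0" by blast
    next
      show "continuous_on {a..r0} U"
        by (rule continuous_on_subset[OF U_cont]) (use a r0R in auto)
    qed
    then show False using U0 U_nn[of a] a r0R by auto
  qed
  have Le: "Le \<ge> 0"
  proof (rule ccontr)
    assume "\<not> Le \<ge> 0"
    then have "eventually (\<lambda>x. deriv U x < 0) (at_right r0)"
      using order_tendstoD(2)[OF dU_right[folded Le_def]] by auto
    then obtain b where b: "b > r0" "\<And>y. r0 < y \<Longrightarrow> y < b \<Longrightarrow> deriv U y < 0"
      unfolding eventually_at_right_field by auto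
    define a where "a = min b ((r0 + R)/2)"
    have a: "r0 < a" "a < R" "a \<le> b" using b r0R by (auto simp: a_def min_def)
    have "U r0 > U a"
    proof (rule DERIV_neg_imp_decreasing_open[OF a(1)])
      fix x assume x: "r0 < x" "x < a"
      then have xi: "x \<in> {r0<..<R}" using a by auto
      have "(U has_real_derivative deriv U x) (at x)" using U_ode2[OF xi] by blast
      moreover have "deriv U x < 0" using b(2)[of x] x a by auto
      ultimately show "\<exists>y. (U has_real_derivative y) (at x) \<and> y < 0" by blast
    next
      show "continuous_on {r0..a} U"
        by (rule continuous_on_subset[OF U_cont]) (use a r0pos in auto)
    qed
    then show False using U0 U_nn[of a] a r0pos by auto
  qed
  have "s1 * Li = Le" using U_jump unfolding Li_def Le_def s1_def .
  moreover have "s1 * Li \<le> 0" using Li s1pos by (simp add: mult_nonneg_nonpos)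
  ultimately have L0: "Le = 0" using Le by linarith
  then have L0': "Li = 0" using \<open>s1 * Li = Le\<close> s1pos by simp
  have z1: "\<forall>t\<in>{0<..<r0}. U t = 0"
  proof
    fix t assume t: "t \<in> {0<..<r0}"
    show "U t = 0"
    proof (rule piece_zero_right_end[where df="deriv U" and ddf="deriv (deriv U)" and \<beta>="(L + \<kappa>) / s1" and A=0 and B=r0 and f=U and t=t])
      show "(U \<longlongrightarrow> 0) (at_left r0)" using U_left_r0 U0 by simp
      show "(deriv U \<longlongrightarrow> 0) (at_left r0)" using dU_left L0' unfolding Li_def by simp
    next
      fix r assume "r \<in> {0<..<r0}" then show "(U has_real_derivative deriv U r) (at r) \<and>
        (deriv U has_real_derivative deriv (deriv U) r) (at r) \<and>
        deriv (deriv U) r = - deriv U r / r - ((L + \<kappa>) / s1) * U r" by (rule U_ode1)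
    qed (use t in auto)
  qed
  have z2: "\<forall>t\<in>{r0<..<R}. U t = 0"
  proof
    fix t assume t: "t \<in> {r0<..<R}"
    show "U t = 0"
    proof (rule piece_zero_left_end[where df="deriv U" and ddf="deriv (deriv U)" and \<beta>="L" and A=r0 and B=R and f=U and t=t])
      show "(U \<longlongrightarrow> 0) (at_right r0)" using U_right_r0 U0 by simp
      show "(deriv U \<longlongrightarrow> 0) (at_right r0)" using dU_right L0 unfolding Le_def by simp
    next
      fix r assume "r \<in> {r0<..<R}" then show "(U has_real_derivative deriv U r) (at r) \<and>
        (deriv U has_real_derivative deriv (deriv U) r) (at r) \<and>
        deriv (deriv U) r = - deriv U r / r - L * U r" by (rule U_ode2)
    qed (use t r0pos in auto)
  qed
  show False by (rule U_zero_False[OF z1 z2])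
qed

lemma U_zero_piece1: "(\<forall>t\<in>{0<..<r0}. U t = 0) \<Longrightarrow> False"
proof -
  assume z: "\<forall>t\<in>{0<..<r0}. U t = 0"
  have "eventually (\<lambda>t. U t = 0) (at_left r0)"
    using eventually_at_left_real[of 0 r0] r0pos z by (auto elim: eventually_mono)
  then have "(U \<longlongrightarrow> 0) (at_left r0)" by (rule tendsto_eventually)
  then have "U r0 = 0" using tendsto_unique[OF trivial_limit_at_left_real U_left_r0] by simp
  then show False using U_r0_pos by simp
qed

lemma U_zero_piece2: "(\<forall>t\<in>{r0<..<R}. U t = 0) \<Longrightarrow> False"
proof -
  assume z: "\<forall>t\<in>{r0<..<R}. U t = 0"
  have "eventually (\<lambda>t. U t = 0) (at_right r0)"
    using eventually_at_right_real[of r0 R] r0R z by (auto elim: eventually_mono)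
  then have "(U \<longlongrightarrow> 0) (at_right r0)" by (rule tendsto_eventually)
  then have "U r0 = 0" using tendsto_unique[OF trivial_limit_at_right_real U_right_r0] by simp
  then show False using U_r0_pos by simp
qed

lemma U_pos_piece1: "t \<in> {0<..<r0} \<Longrightarrow> U t > 0"
proof (rule ccontr)
  assume t: "t \<in> {0<..<r0}" and "\<not> U t > 0"
  then have Ut: "U t = 0" using U_nn[of t] r0R by auto
  have der: "(U has_real_derivative deriv U t) (at t)" using U_ode1[OF t] by blast
  have pos: "0 < min t (r0 - t)" using t by auto
  have mono: "\<forall>y. \<bar>t - y\<bar> < min t (r0 - t) \<longrightarrow> U t \<le> U y"
  proof (intro allI impI)
    fix y assume "\<bar>t - y\<bar> < min t (r0 - t)"
    then have "y \<in> {0..R}" using t r0pos r0R by (auto simp: abs_less_iff)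
    then show "U t \<le> U y" using Ut U_nn by simp
  qed
  have "deriv U t = 0" by (rule DERIV_local_min[OF der pos mono])
  have "\<forall>s\<in>{0<..<r0}. U s = 0"
  proof
    fix s assume s: "s \<in> {0<..<r0}"
    show "U s = 0"
      proof (rule piece_zero_interior[where df="deriv U" and ddf="deriv (deriv U)" and \<beta>="(L + \<kappa>) / s1"
            and A=0 and B=r0 and tz=t and f=U and t=s])
        fix r assume "r \<in> {0<..<r0}" then show "(U has_real_derivative deriv U r) (at r) \<and>
          (deriv U has_real_derivative deriv (deriv U) r) (at r) \<and>
          deriv (deriv U) r = - deriv U r / r - ((L + \<kappa>) / s1) * U r" by (rule U_ode1)
      qed (use s t Ut \<open>deriv U t = 0\<close> in auto)
  qed
  then show False by (rule U_zero_piece1)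
qed

lemma U_pos_piece2: "t \<in> {r0<..<R} \<Longrightarrow> U t > 0"
proof (rule ccontr)
  assume t: "t \<in> {r0<..<R}" and "\<not> U t > 0"
  then have Ut: "U t = 0" using U_nn[of t] r0pos by auto
  have der: "(U has_real_derivative deriv U t) (at t)" using U_ode2[OF t] by blast
  have pos: "0 < min (t - r0) (R - t)" using t by auto
  have mono: "\<forall>y. \<bar>t - y\<bar> < min (t - r0) (R - t) \<longrightarrow> U t \<le> U y"
  proof (intro allI impI)
    fix y assume "\<bar>t - y\<bar> < min (t - r0) (R - t)"
    then have "y \<in> {0..R}" using t r0pos r0R by (auto simp: abs_less_iff)
    then show "U t \<le> U y" using Ut U_nn by simp
  qed
  have "deriv U t = 0" by (rule DERIV_local_min[OF der pos mono])
  have "\<forall>s\<in>{r0<..<R}. U s = 0"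
  proof
    fix s assume s: "s \<in> {r0<..<R}"
    show "U s = 0"
      proof (rule piece_zero_interior[where df="deriv U" and ddf="deriv (deriv U)" and \<beta>="L"
            and A=r0 and B=R and tz=t and f=U and t=s])
        fix r assume "r \<in> {r0<..<R}" then show "(U has_real_derivative deriv U r) (at r) \<and>
          (deriv U has_real_derivative deriv (deriv U) r) (at r) \<and>
          deriv (deriv U) r = - deriv U r / r - L * U r" by (rule U_ode2)
      qed (use s t Ut \<open>deriv U t = 0\<close> r0pos in auto)
  qed
  then show False by (rule U_zero_piece2)
qed

end



lemma half_at_right: "filterlim (\<lambda>s::real. s/2) (at_right 0) (at_right 0)"
proof (rule filterlim_at_withinI)
  have "((\<lambda>s::real. s/2) \<longlongrightarrow> 0/2) (at_right 0)"
    by (rule tendsto_divide[OF tendsto_ident_at tendsto_const]) simp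
  then show "((\<lambda>s::real. s/2) \<longlongrightarrow> 0) (at_right 0)" by simp
  show "eventually (\<lambda>s::real. s/2 \<in> {0<..} - {0}) (at_right 0)"
    using eventually_at_right_real[of 0 1] by (auto elim: eventually_mono)
qed

context setting begin

lemma U_0_pos: "U 0 > 0"
proof (rule ccontr)
  assume "\<not> U 0 > 0"
  then have U00: "U 0 = 0" using U_nn[of 0] r0pos r0R by auto
  define \<beta> where "\<beta> = (L + \<kappa>) / s1"
  define C where "C = \<bar>\<beta>\<bar>"
  have C: "C \<ge> 0" by (simp add: C_def)
  define \<rho> where "\<rho> = min (r0/2) (min (1/2) (1/(C+1)))"
  have \<rho>: "0 < \<rho>" "\<rho> < r0" "\<rho> \<le> 1/2" "\<rho> \<le> 1/(C+1)"
    using r0pos C by (auto simp: \<rho>_def)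
  have "C * \<rho> \<le> C * (1/(C+1))" by (rule mult_left_mono[OF \<rho>(4) C])
  also have "C * (1/(C+1)) \<le> 1" using C by (simp add: field_simps)
  finally have C\<rho>: "C * \<rho> \<le> 1" .
  have C\<rho>\<rho>: "C * \<rho> * \<rho> \<le> 1/2"
  proof -
    have "C * \<rho> * \<rho> \<le> 1 * \<rho>" by (rule mult_right_mono[OF C\<rho>]) (use \<rho> in auto)
    then show ?thesis using \<rho>(3) by linarith
  qed
  have cont\<rho>: "continuous_on {0..\<rho>} U"
    by (rule continuous_on_subset[OF U_cont]) (use \<rho> r0R in auto)
  obtain xm where xm: "xm \<in> {0..\<rho>}" "\<forall>y\<in>{0..\<rho>}. U y \<le> U xm"
    using continuous_attains_sup[OF compact_Icc _ cont\<rho>] \<rho> by auto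
  define M where "M = U xm"
  have U\<rho>: "U \<rho> > 0" by (rule U_pos_piece1) (use \<rho> in auto)
  have "U \<rho> \<le> U xm" using xm(2) \<rho> by auto
  then have Mpos: "M > 0" using U\<rho> unfolding M_def by simp
  have Ubd: "0 \<le> U y \<and> U y \<le> M" if "y \<in> {0..\<rho>}" for y
    using xm(2) that U_nn[of y] \<rho> r0R unfolding M_def by auto
  define p where "p r = r * deriv U r" for r
  have pder: "(p has_real_derivative (- \<beta> * r * U r)) (at r)" if r: "r \<in> {0<..\<rho>}" for r
  proof -
    have ri: "r \<in> {0<..<r0}" using r \<rho> by auto
    have o: "(U has_real_derivative deriv U r) (at r)" "(deriv U has_real_derivative deriv (deriv U) r) (at r)"
      "deriv (deriv U) r = - deriv U r / r - \<beta> * U r"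
      using U_ode1[OF ri] unfolding \<beta>_def by auto
    have "(p has_real_derivative (deriv U r + r * deriv (deriv U) r)) (at r)"
      unfolding p_def by (auto intro!: derivative_eq_intros o(2))
    moreover have "deriv U r + r * deriv (deriv U) r = - \<beta> * r * U r"
      using o(3) ri by (simp add: field_simps)
    ultimately show ?thesis by simp
  qed
  have pbd: "\<bar>- \<beta> * r * U r\<bar> \<le> C * \<rho> * M" if r: "r \<in> {0<..\<rho>}" for r
  proof -
    have "\<bar>- \<beta> * r * U r\<bar> = C * r * U r" using r Ubd[of r] by (simp add: C_def abs_mult)
    also have "\<dots> \<le> C * \<rho> * M"
      using r Ubd[of r] C by (intro mult_mono) (auto intro: mult_left_mono)
    finally show ?thesis .
  qed
  have pcont: "continuous_on {s..r} p" if "0 < s" "r \<le> \<rho>" for s r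
  proof (rule continuous_at_imp_continuous_on, intro ballI)
    fix x assume "x \<in> {s..r}"
    then have "x \<in> {0<..\<rho>}" using that by auto
    from DERIV_isCont[OF pder[OF this]] show "isCont p x" .
  qed
  have pdiff: "\<bar>p r - p s\<bar> \<le> C * \<rho> * M * r" if sr: "0 < s" "s < r" "r \<le> \<rho>" for s r
  proof -
    have dp: "p differentiable (at x)" if "s < x" "x < r" for x
    proof -
      have "x \<in> {0<..\<rho>}" using that sr by auto
      from pder[OF this] show ?thesis unfolding real_differentiable_def by blast
    qed
    obtain l z where z: "s < z" "z < r" "(p has_real_derivative l) (at z)" "p r - p s = (r - s) * l"
      using MVT[OF sr(2) pcont[OF sr(1) sr(3)] dp] by blast
    have zi: "z \<in> {0<..\<rho>}" using z sr by auto
    have "l = - \<beta> * z * U z" using DERIV_unique[OF z(3) pder[OF zi]] .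
    then have "\<bar>l\<bar> \<le> C * \<rho> * M" using pbd[OF zi] by simp
    then have "\<bar>p r - p s\<bar> \<le> (r - s) * (C * \<rho> * M)" using z(4) sr by (simp add: abs_mult mult_left_mono)
    also have "\<dots> \<le> r * (C * \<rho> * M)" using sr C Mpos \<rho> by (intro mult_right_mono) auto
    finally show ?thesis by (simp add: algebra_simps)
  qed
  have pxi: "\<exists>\<xi>. s/2 < \<xi> \<and> \<xi> < s \<and> \<bar>p \<xi>\<bar> \<le> 2 * \<bar>U s - U (s/2)\<bar>" if s: "0 < s" "s \<le> \<rho>" for s
  proof -
    have c: "continuous_on {s/2..s} U"
      by (rule continuous_on_subset[OF U_cont]) (use s \<rho> r0R in auto)
    have d: "U differentiable (at x)" if "s/2 < x" "x < s" for x
    proof -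
      have "x \<in> {0<..<r0}" using that s \<rho> by auto
      from U_ode1[OF this] show ?thesis unfolding real_differentiable_def by blast
    qed
    obtain l z where z: "s/2 < z" "z < s" "(U has_real_derivative l) (at z)" "U s - U (s/2) = (s - s/2) * l"
      using MVT[OF _ c d] s by auto
    have "z \<in> {0<..<r0}" using z s \<rho> by auto
    then have "l = deriv U z" using DERIV_unique[OF z(3)] U_ode1 by blast
    have "\<bar>p z\<bar> = z * \<bar>l\<bar>" using z s \<open>l = deriv U z\<close> by (simp add: p_def abs_mult)
    also have "\<dots> \<le> s * \<bar>l\<bar>" using z by (intro mult_right_mono) auto
    also have "\<dots> = 2 * \<bar>U s - U (s/2)\<bar>"
    proof -
      have e: "U s - U (s/2) = (s/2) * l" using z(4) by (simp add: algebra_simps)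
      show ?thesis unfolding e using s by (simp add: abs_mult)
    qed
    finally show ?thesis using z by blast
  qed
  have key: "\<bar>p r\<bar> \<le> C * \<rho> * M * r + 2 * \<bar>U s - U (s/2)\<bar>" if rs: "0 < s" "s < r" "r \<le> \<rho>" for r s
  proof -
    obtain \<xi> where \<xi>: "s/2 < \<xi>" "\<xi> < s" "\<bar>p \<xi>\<bar> \<le> 2 * \<bar>U s - U (s/2)\<bar>" using pxi[of s] rs by auto
    have "\<bar>p r - p \<xi>\<bar> \<le> C * \<rho> * M * r" by (rule pdiff) (use \<xi> rs in auto)
    then show ?thesis using \<xi>(3) by linarith
  qed
  have Uright0: "(U \<longlongrightarrow> U 0) (at_right 0)"
    using continuous_on_Icc_at_rightD[OF U_cont] r0pos r0R by auto
  have Uhalf: "((\<lambda>s. U (s/2)) \<longlongrightarrow> U 0) (at_right 0)"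
    using filterlim_compose[OF Uright0 half_at_right] .
  have plim: "\<bar>p r\<bar> \<le> C * \<rho> * M * r" if r: "0 < r" "r \<le> \<rho>" for r
  proof -
    have "((\<lambda>s. C * \<rho> * M * r + 2 * \<bar>U s - U (s/2)\<bar>) \<longlongrightarrow> C * \<rho> * M * r + 2 * \<bar>U 0 - U 0\<bar>) (at_right 0)"
      by (intro tendsto_intros Uright0 Uhalf)
    moreover have "eventually (\<lambda>s. \<bar>p r\<bar> \<le> C * \<rho> * M * r + 2 * \<bar>U s - U (s/2)\<bar>) (at_right 0)"
    proof (rule eventually_mono)
      show "eventually (\<lambda>s. s \<in> {0<..<r}) (at_right 0)" using r by (intro eventually_at_right_real) auto
    next
      fix s assume "s \<in> {0<..<r}"
      then show "\<bar>p r\<bar> \<le> C * \<rho> * M * r + 2 * \<bar>U s - U (s/2)\<bar>" using key[of s r] r by auto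
    qed
    ultimately have "\<bar>p r\<bar> \<le> C * \<rho> * M * r + 2 * \<bar>U 0 - U 0\<bar>"
      using tendsto_le[OF trivial_limit_at_right_real _ tendsto_const] by blast
    then show ?thesis by simp
  qed
  have dUbd: "\<bar>deriv U r\<bar> \<le> C * \<rho> * M" if r: "0 < r" "r \<le> \<rho>" for r
  proof -
    have "r * \<bar>deriv U r\<bar> \<le> r * (C * \<rho> * M)" using plim[OF r] r by (simp add: p_def abs_mult algebra_simps)
    then show ?thesis using r by simp
  qed
  have Usmall: "U r \<le> M/2" if r: "0 < r" "r \<le> \<rho>" for r
  proof -
    have c: "continuous_on {0..r} U"
      by (rule continuous_on_subset[OF U_cont]) (use r \<rho> r0R in auto)
    have d: "U differentiable (at x)" if "0 < x" "x < r" for x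
    proof -
      have "x \<in> {0<..<r0}" using that r \<rho> by auto
      from U_ode1[OF this] show ?thesis unfolding real_differentiable_def by blast
    qed
    obtain l z where z: "0 < z" "z < r" "(U has_real_derivative l) (at z)" "U r - U 0 = (r - 0) * l"
      using MVT[OF r(1) c d] by auto
    have "z \<in> {0<..<r0}" using z r \<rho> by auto
    then have "l = deriv U z" using DERIV_unique[OF z(3)] U_ode1 by blast
    then have l: "l \<le> C * \<rho> * M" using dUbd[of z] z r by auto
    have "U r = r * l" using z(4) U00 by simp
    also have "\<dots> \<le> r * (C * \<rho> * M)" using l r by (intro mult_left_mono) auto
    also have "\<dots> \<le> \<rho> * (C * \<rho> * M)" using r C Mpos \<rho> by (intro mult_right_mono) auto
    also have "\<dots> = (C * \<rho> * \<rho>) * M" by (simp add: algebra_simps)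
    also have "\<dots> \<le> (1/2) * M" using C\<rho>\<rho> Mpos by (intro mult_right_mono) auto
    finally show ?thesis by simp
  qed
  have "M \<le> M/2"
  proof (cases "xm = 0")
    case True then show ?thesis using U00 Mpos unfolding M_def by simp
  next
    case False then show ?thesis using Usmall[of xm] xm(1) unfolding M_def by auto
  qed
  then show False using Mpos by simp
qed

lemma U_pos: "t \<in> {0..<R} \<Longrightarrow> U t > 0"
  using U_0_pos U_r0_pos U_pos_piece1[of t] U_pos_piece2[of t]
  by (cases "t = 0"; cases "t = r0"; cases "t < r0") auto

end



lemma osl_lims:
  assumes "has_one_sided_limits f x"
  shows "(f \<longlongrightarrow> lim_int f x) (at_left x)" "(f \<longlongrightarrow> lim_ext f x) (at_right x)"
proof -
  obtain l1 l2 where l: "(f \<longlongrightarrow> l1) (at_left x)" "(f \<longlongrightarrow> l2) (at_right x)"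
    using assms unfolding has_one_sided_limits_def by blast
  have "lim_int f x = l1" unfolding lim_int_def by (rule tendsto_Lim[OF _ l(1)]) simp
  moreover have "lim_ext f x = l2" unfolding lim_ext_def by (rule tendsto_Lim[OF _ l(2)]) simp
  ultimately show "(f \<longlongrightarrow> lim_int f x) (at_left x)" "(f \<longlongrightarrow> lim_ext f x) (at_right x)" using l by simp_all
qed

lemma Wder_alg:
  fixes t \<sigma> Lm c U dU ddU z1 d1 dd1 zK dK ddK :: real
  assumes t: "t \<noteq> 0"
    and eU: "\<sigma> * (t * ddU + dU) = - Lm * t * U + 0 * U / t"
    and e1: "\<sigma> * (t * dd1 + d1) = - Lm * t * z1 + 1 * z1 / t"
    and eK: "\<sigma> * (t * ddK + dK) = - Lm * t * zK + c * zK / t"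
  shows "\<sigma> * (U * (d1 - dK) - (z1 - zK) * dU) + t * \<sigma> * (dU * (d1 - dK) + U * (dd1 - ddK) - ((d1 - dK) * dU + (z1 - zK) * ddU))
     = U * (c * (z1 - zK) - (c - 1) * z1) / t"
proof -
  have "\<sigma> * (U * (d1 - dK) - (z1 - zK) * dU) + t * \<sigma> * (dU * (d1 - dK) + U * (dd1 - ddK) - ((d1 - dK) * dU + (z1 - zK) * ddU))
      = U * (\<sigma> * (t * dd1 + d1)) - U * (\<sigma> * (t * ddK + dK)) - (z1 - zK) * (\<sigma> * (t * ddU + dU))"
    by (simp add: algebra_simps)
  also have "\<dots> = U * (- Lm * t * z1 + 1 * z1 / t) - U * (- Lm * t * zK + c * zK / t) - (z1 - zK) * (- Lm * t * U + 0 * U / t)"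
    unfolding eU e1 eK ..
  also have "\<dots> = U * (c * (z1 - zK) - (c - 1) * z1) / t"
    using t by (simp add: field_simps)
  finally show ?thesis .
qed

lemma dbound:
  fixes f df ddf :: "real \<Rightarrow> real"
  assumes a: "0 < a" "a < R"
    and d: "\<And>r. r \<in> {a..<R} \<Longrightarrow> (f has_real_derivative df r) (at r) \<and> (df has_real_derivative ddf r) (at r)"
    and b: "\<And>r. r \<in> {a..<R} \<Longrightarrow> \<bar>r * ddf r + df r\<bar> \<le> D"
  shows "\<exists>B. \<forall>r\<in>{a..<R}. \<bar>df r\<bar> \<le> B"
proof -
  define g where "g r = r * df r" for r
  have gd: "(g has_real_derivative (df r + r * ddf r)) (at r)" if "r \<in> {a..<R}" for r
    unfolding g_def using d[OF that] by (auto intro!: derivative_eq_intros)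
  have D: "D \<ge> 0" using b[of a] a by auto
  have gb: "\<bar>g r\<bar> \<le> \<bar>g a\<bar> + R * D" if r: "r \<in> {a..<R}" for r
  proof (cases "r = a")
    case True then show ?thesis using D a by simp
  next
    case False
    then have ar: "a < r" using r by auto
    have c: "continuous_on {a..r} g"
    proof (rule continuous_at_imp_continuous_on, intro ballI)
      fix x assume "x \<in> {a..r}"
      then have "x \<in> {a..<R}" using r by auto
      from DERIV_isCont[OF gd[OF this]] show "isCont g x" .
    qed
    have dd: "g differentiable (at x)" if "a < x" "x < r" for x
    proof -
      have "x \<in> {a..<R}" using that r by auto
      from gd[OF this] show ?thesis unfolding real_differentiable_def by blast
    qed
    obtain l z where z: "a < z" "z < r" "(g has_real_derivative l) (at z)" "g r - g a = (r - a) * l"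
      using MVT[OF ar c dd] by blast
    have zi: "z \<in> {a..<R}" using z r by auto
    have "l = df z + z * ddf z" using DERIV_unique[OF z(3) gd[OF zi]] .
    then have "\<bar>l\<bar> \<le> D" using b[OF zi] by (simp add: algebra_simps)
    then have "\<bar>g r - g a\<bar> \<le> (r - a) * D" using z(4) ar by (simp add: abs_mult mult_left_mono)
    also have "\<dots> \<le> R * D" using r a D by (intro mult_right_mono) auto
    finally show ?thesis by linarith
  qed
  show ?thesis
  proof (intro exI ballI)
    fix r assume r: "r \<in> {a..<R}"
    have "a * \<bar>df r\<bar> \<le> r * \<bar>df r\<bar>" using r by (intro mult_right_mono) auto
    also have "\<dots> = \<bar>g r\<bar>" using r a by (simp add: g_def abs_mult)
    also have "\<dots> \<le> \<bar>g a\<bar> + R * D" by (rule gb[OF r])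
    finally have "a * \<bar>df r\<bar> \<le> \<bar>g a\<bar> + R * D" .
    then show "\<bar>df r\<bar> \<le> (\<bar>g a\<bar> + R * D) / a" using a by (simp add: field_simps)
  qed
qed

context setting begin

lemma zfacts:
  assumes "z_problem \<kappa> r0 R \<alpha> L U j Z"
  shows "r \<in> {0<..<r0} \<union> {r0<..<R} \<Longrightarrow> radial_eq \<kappa> r0 \<alpha> L (real j ^ 2) Z r"
    and "(Z \<longlongrightarrow> lim_int Z r0) (at_left r0)" "(Z \<longlongrightarrow> lim_ext Z r0) (at_right r0)"
    and "(deriv Z \<longlongrightarrow> lim_int (deriv Z) r0) (at_left r0)" "(deriv Z \<longlongrightarrow> lim_ext (deriv Z) r0) (at_right r0)"
    and "lim_ext (deriv Z) r0 - s1 * lim_int (deriv Z) r0 = - \<kappa> * U r0"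
    and "lim_ext Z r0 - lim_int Z r0 = - (lim_ext (deriv U) r0 - lim_int (deriv U) r0)"
    and "Z 0 = 0" "(Z \<longlongrightarrow> 0) (at_right 0)" "Z R = 0" "(Z \<longlongrightarrow> 0) (at_left R)"
  using assms osl_lims unfolding z_problem_def s1_def by auto

lemma Z1rad: "r \<in> {0<..<r0} \<union> {r0<..<R} \<Longrightarrow> radial_eq \<kappa> r0 \<alpha> L 1 Z1 r"
  using zfacts(1)[OF zp1] by simp
lemma ZKrad: "r \<in> {0<..<r0} \<union> {r0<..<R} \<Longrightarrow> radial_eq \<kappa> r0 \<alpha> L (real k ^ 2) ZK r"
  using zfacts(1)[OF zpk] by simp

definition "w t = (if t = r0 then lim_int Z1 r0 - lim_int ZK r0 else Z1 t - ZK t)"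
definition "dw t = deriv Z1 t - deriv ZK t"
definition "Wf t = (if t = r0 then r0 * s1 * (U r0 * (lim_int (deriv Z1) r0 - lim_int (deriv ZK) r0) - w r0 * lim_int (deriv U) r0)
   else t * sigma \<kappa> r0 \<alpha> t * (U t * dw t - w t * deriv U t))"

lemma w_eq: "x \<noteq> r0 \<Longrightarrow> w x = Z1 x - ZK x" by (simp add: w_def)
lemma w_r0: "w r0 = lim_int Z1 r0 - lim_int ZK r0" by (simp add: w_def)

lemma w_left: "(w \<longlongrightarrow> w r0) (at_left r0)"
proof -
  have "((\<lambda>t. Z1 t - ZK t) \<longlongrightarrow> lim_int Z1 r0 - lim_int ZK r0) (at_left r0)"
    by (intro tendsto_diff zfacts(2)[OF zp1] zfacts(2)[OF zpk])
  moreover have "eventually (\<lambda>t. Z1 t - ZK t = w t) (at_left r0)"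
    unfolding eventually_at_filter by (auto intro!: always_eventually simp: w_eq)
  ultimately show ?thesis using tendsto_cong by (fastforce simp: w_r0)
qed

lemma w_right: "(w \<longlongrightarrow> w r0) (at_right r0)"
proof -
  have "((\<lambda>t. Z1 t - ZK t) \<longlongrightarrow> lim_ext Z1 r0 - lim_ext ZK r0) (at_right r0)"
    by (intro tendsto_diff zfacts(3)[OF zp1] zfacts(3)[OF zpk])
  moreover have "lim_ext Z1 r0 - lim_ext ZK r0 = lim_int Z1 r0 - lim_int ZK r0"
    using zfacts(7)[OF zp1] zfacts(7)[OF zpk] by simp
  moreover have "eventually (\<lambda>t. Z1 t - ZK t = w t) (at_right r0)"
    unfolding eventually_at_filter by (auto intro!: always_eventually simp: w_eq)
  ultimately show ?thesis using tendsto_cong by (fastforce simp: w_r0)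
qed

lemma near_same_side:
  assumes "t \<noteq> r0"
  shows "eventually (\<lambda>x. x \<noteq> r0 \<and> sigma \<kappa> r0 \<alpha> x = sigma \<kappa> r0 \<alpha> t \<and> mstar \<kappa> r0 x = mstar \<kappa> r0 t) (nhds t)"
proof (cases "t < r0")
  case True
  have "eventually (\<lambda>x. x \<in> {..<r0}) (nhds t)" using True by (intro eventually_nhds_in_open) auto
  then show ?thesis by (rule eventually_mono) (use True in \<open>auto simp: sigma_def mstar_def\<close>)
next
  case False
  then have "t > r0" using assms by auto
  then have "eventually (\<lambda>x. x \<in> {r0<..}) (nhds t)" by (intro eventually_nhds_in_open) auto
  then show ?thesis by (rule eventually_mono) (use False in \<open>auto simp: sigma_def mstar_def\<close>)
qed

lemma pieces_iff: "t \<in> {0<..<R} - {r0} \<Longrightarrow> t \<in> {0<..<r0} \<union> {r0<..<R}"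
  by auto

lemma w_deriv: "t \<in> {0<..<R} - {r0} \<Longrightarrow> (w has_real_derivative dw t) (at t)"
proof -
  assume t: "t \<in> {0<..<R} - {r0}"
  have d1: "(Z1 has_real_derivative deriv Z1 t) (at t)" using Z1rad[OF pieces_iff[OF t]] unfolding radial_eq_def by blast
  have dK: "(ZK has_real_derivative deriv ZK t) (at t)" using ZKrad[OF pieces_iff[OF t]] unfolding radial_eq_def by blast
  have "((\<lambda>x. Z1 x - ZK x) has_real_derivative dw t) (at t)" unfolding dw_def by (intro DERIV_diff d1 dK)
  moreover have "eventually (\<lambda>x. w x = Z1 x - ZK x) (nhds t)"
    using near_same_side[of t] t by (auto simp: w_eq elim!: eventually_mono)
  ultimately show ?thesis using DERIV_cong_ev[of t t w "\<lambda>x. Z1 x - ZK x" "dw t" "dw t"] by simp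
qed

lemma w_isCont: "t \<in> {0<..<R} \<Longrightarrow> isCont w t"
proof (cases "t = r0")
  case True
  then show ?thesis using w_left w_right unfolding isCont_def filterlim_at_split by simp
next
  case False
  assume "t \<in> {0<..<R}"
  then show ?thesis using DERIV_isCont[OF w_deriv] False by auto
qed

lemma w0: "w 0 = 0" "(w \<longlongrightarrow> 0) (at_right 0)"
proof -
  show "w 0 = 0" using zfacts(8)[OF zp1] zfacts(8)[OF zpk] r0pos by (simp add: w_def)
  have "((\<lambda>t. Z1 t - ZK t) \<longlongrightarrow> 0 - 0) (at_right 0)"
    by (intro tendsto_diff zfacts(9)[OF zp1] zfacts(9)[OF zpk])
  moreover have "eventually (\<lambda>t. Z1 t - ZK t = w t) (at_right 0)"
    using eventually_at_right_real[of 0 r0] r0pos by (auto simp: w_eq elim!: eventually_mono)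
  ultimately show "(w \<longlongrightarrow> 0) (at_right 0)" using tendsto_cong by fastforce
qed

lemma wR: "w R = 0" "(w \<longlongrightarrow> 0) (at_left R)"
proof -
  show "w R = 0" using zfacts(10)[OF zp1] zfacts(10)[OF zpk] r0R by (simp add: w_def)
  have "((\<lambda>t. Z1 t - ZK t) \<longlongrightarrow> 0 - 0) (at_left R)"
    by (intro tendsto_diff zfacts(11)[OF zp1] zfacts(11)[OF zpk])
  moreover have "eventually (\<lambda>t. Z1 t - ZK t = w t) (at_left R)"
    using eventually_at_left_real[of r0 R] r0R by (auto simp: w_eq elim!: eventually_mono)
  ultimately show "(w \<longlongrightarrow> 0) (at_left R)" using tendsto_cong by fastforce
qed

lemma w_cont_on: assumes "0 \<le> x" "y < R" shows "continuous_on {x..y} w"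
proof (cases "0 < y")
  case True
  have "continuous_on {0..y} w"
  proof (rule continuous_on_IccI)
    show "(w \<longlongrightarrow> w 0) (at_right 0)" using w0 by simp
    show "(w \<longlongrightarrow> w y) (at_left y)" using w_isCont[of y] True assms unfolding isCont_def filterlim_at_split by auto
    fix t assume "0 < t" "t < y"
    then show "w \<midarrow>t\<rightarrow> w t" using w_isCont[of t] assms unfolding isCont_def by auto
  qed (use True in auto)
  then show ?thesis by (rule continuous_on_subset) (use assms in auto)
next
  case False
  then have "{x..y} \<subseteq> {0}" using assms by auto
  then have "{x..y} = {} \<or> {x..y} = {0}" by blast
  then show ?thesis by auto
qed

end



context setting begin

lemma Wf_deriv:
  assumes t: "t \<in> {0<..<R} - {r0}"
  shows "(Wf has_real_derivative U t * (real k ^ 2 * w t - (real k ^ 2 - 1) * Z1 t) / t) (at t)"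
proof -
  define \<sigma> where "\<sigma> = sigma \<kappa> r0 \<alpha> t"
  define Lm where "Lm = L + mstar \<kappa> r0 t"
  define c where "c = real k ^ 2"
  have tp: "t > 0" "t \<noteq> r0" using t by auto
  have rU: "radial_eq \<kappa> r0 \<alpha> L 0 U t" by (rule U_rad[OF pieces_iff[OF t]])
  have r1: "radial_eq \<kappa> r0 \<alpha> L 1 Z1 t" by (rule Z1rad[OF pieces_iff[OF t]])
  have rK: "radial_eq \<kappa> r0 \<alpha> L c ZK t" unfolding c_def by (rule ZKrad[OF pieces_iff[OF t]])
  have eU: "\<sigma> * (t * deriv (deriv U) t + deriv U t) = - Lm * t * U t + 0 * U t / t"
    using radial_eq_form[OF rU tp(1)] unfolding \<sigma>_def Lm_def by simp
  have e1: "\<sigma> * (t * deriv (deriv Z1) t + deriv Z1 t) = - Lm * t * Z1 t + 1 * Z1 t / t"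
    using radial_eq_form[OF r1 tp(1)] unfolding \<sigma>_def Lm_def by simp
  have eK: "\<sigma> * (t * deriv (deriv ZK) t + deriv ZK t) = - Lm * t * ZK t + c * ZK t / t"
    using radial_eq_form[OF rK tp(1)] unfolding \<sigma>_def Lm_def by simp
  note alg = Wder_alg[OF _ eU e1 eK]
  have dU: "(U has_real_derivative deriv U t) (at t)" "(deriv U has_real_derivative deriv (deriv U) t) (at t)"
    using rU unfolding radial_eq_def by blast+
  have d1: "(Z1 has_real_derivative deriv Z1 t) (at t)" "(deriv Z1 has_real_derivative deriv (deriv Z1) t) (at t)"
    using r1 unfolding radial_eq_def by blast+
  have dK: "(ZK has_real_derivative deriv ZK t) (at t)" "(deriv ZK has_real_derivative deriv (deriv ZK) t) (at t)"
    using rK unfolding radial_eq_def by blast+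
  define g where "g x = \<sigma> * (x * (U x * (deriv Z1 x - deriv ZK x) - (Z1 x - ZK x) * deriv U x))" for x
  have hA: "((\<lambda>x. U x * (deriv Z1 x - deriv ZK x)) has_real_derivative
      deriv U t * (deriv Z1 t - deriv ZK t) + (deriv (deriv Z1) t - deriv (deriv ZK) t) * U t) (at t)"
    by (rule DERIV_mult[OF dU(1) DERIV_diff[OF d1(2) dK(2)]])
  have hB: "((\<lambda>x. (Z1 x - ZK x) * deriv U x) has_real_derivative
      (deriv Z1 t - deriv ZK t) * deriv U t + deriv (deriv U) t * (Z1 t - ZK t)) (at t)"
    by (rule DERIV_mult[OF DERIV_diff[OF d1(1) dK(1)] dU(2)])
  have hC: "((\<lambda>x. U x * (deriv Z1 x - deriv ZK x) - (Z1 x - ZK x) * deriv U x) has_real_derivative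
      (deriv U t * (deriv Z1 t - deriv ZK t) + (deriv (deriv Z1) t - deriv (deriv ZK) t) * U t)
      - ((deriv Z1 t - deriv ZK t) * deriv U t + deriv (deriv U) t * (Z1 t - ZK t))) (at t)"
    by (rule DERIV_diff[OF hA hB])
  have hD: "(g has_real_derivative \<sigma> * (1 * (U t * (deriv Z1 t - deriv ZK t) - (Z1 t - ZK t) * deriv U t) +
      ((deriv U t * (deriv Z1 t - deriv ZK t) + (deriv (deriv Z1) t - deriv (deriv ZK) t) * U t)
      - ((deriv Z1 t - deriv ZK t) * deriv U t + deriv (deriv U) t * (Z1 t - ZK t))) * t)) (at t)"
    unfolding g_def by (rule DERIV_cmult[OF DERIV_mult[OF DERIV_ident hC]])
  have eqD: "\<sigma> * (1 * (U t * (deriv Z1 t - deriv ZK t) - (Z1 t - ZK t) * deriv U t) +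
      ((deriv U t * (deriv Z1 t - deriv ZK t) + (deriv (deriv Z1) t - deriv (deriv ZK) t) * U t)
      - ((deriv Z1 t - deriv ZK t) * deriv U t + deriv (deriv U) t * (Z1 t - ZK t))) * t)
     = U t * (c * (Z1 t - ZK t) - (c - 1) * Z1 t) / t"
    using alg tp by (simp add: algebra_simps)
  have ev: "eventually (\<lambda>x. Wf x = g x) (nhds t)"
    using near_same_side[OF tp(2)]
  proof (rule eventually_mono)
    fix x assume x: "x \<noteq> r0 \<and> sigma \<kappa> r0 \<alpha> x = sigma \<kappa> r0 \<alpha> t \<and> mstar \<kappa> r0 x = mstar \<kappa> r0 t"
    then have xne: "x \<noteq> r0" and sx: "sigma \<kappa> r0 \<alpha> x = sigma \<kappa> r0 \<alpha> t" by auto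
    show "Wf x = g x" unfolding Wf_def g_def dw_def \<sigma>_def w_eq[OF xne] using xne sx by (simp add: algebra_simps)
  qed
  have "(Wf has_real_derivative U t * (c * (Z1 t - ZK t) - (c - 1) * Z1 t) / t) (at t)"
    using DERIV_cong_ev[OF refl ev refl] hD eqD by simp
  then show ?thesis using w_eq[OF tp(2)] unfolding c_def by simp
qed

lemma Wf_isCont: assumes t: "t \<in> {0<..<R}" shows "isCont Wf t"
proof (cases "t = r0")
  case False
  then show ?thesis using DERIV_isCont[OF Wf_deriv] t by auto
next
  case True
  define Li1 where "Li1 = lim_int (deriv Z1) r0"
  define LiK where "LiK = lim_int (deriv ZK) r0"
  define Le1 where "Le1 = lim_ext (deriv Z1) r0"
  define LeK where "LeK = lim_ext (deriv ZK) r0"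
  define LiU where "LiU = lim_int (deriv U) r0"
  define LeU where "LeU = lim_ext (deriv U) r0"
  have Wr0: "Wf r0 = r0 * s1 * (U r0 * (Li1 - LiK) - w r0 * LiU)"
    unfolding Wf_def Li1_def LiK_def LiU_def by simp
  have dwl: "(dw \<longlongrightarrow> Li1 - LiK) (at_left r0)" unfolding dw_def Li1_def LiK_def
    by (intro tendsto_diff zfacts(4)[OF zp1] zfacts(4)[OF zpk])
  have dwr: "(dw \<longlongrightarrow> Le1 - LeK) (at_right r0)" unfolding dw_def Le1_def LeK_def
    by (intro tendsto_diff zfacts(5)[OF zp1] zfacts(5)[OF zpk])
  have jumps: "Le1 - LeK = s1 * (Li1 - LiK)" "LeU = s1 * LiU"
    using zfacts(6)[OF zp1] zfacts(6)[OF zpk] U_jump unfolding Le1_def LeK_def Li1_def LiK_def LeU_def LiU_def s1_def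
    by (simp_all add: algebra_simps)
  have "((\<lambda>x. x * s1 * (U x * dw x - w x * deriv U x)) \<longlongrightarrow> r0 * s1 * (U r0 * (Li1 - LiK) - w r0 * LiU)) (at_left r0)"
    by (intro tendsto_intros dwl U_left_r0 w_left dU_left[folded LiU_def])
  moreover have "eventually (\<lambda>x. x * s1 * (U x * dw x - w x * deriv U x) = Wf x) (at_left r0)"
    unfolding eventually_at_left_field by (rule exI[of _ "r0 - 1"]) (auto simp: Wf_def sig1)
  ultimately have l: "(Wf \<longlongrightarrow> Wf r0) (at_left r0)" unfolding Wr0 using tendsto_cong by fastforce
  have "((\<lambda>x. x * 1 * (U x * dw x - w x * deriv U x)) \<longlongrightarrow> r0 * 1 * (U r0 * (Le1 - LeK) - w r0 * LeU)) (at_right r0)"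
    by (intro tendsto_intros dwr U_right_r0 w_right dU_right[folded LeU_def])
  moreover have "eventually (\<lambda>x. x * 1 * (U x * dw x - w x * deriv U x) = Wf x) (at_right r0)"
    unfolding eventually_at_right_field by (rule exI[of _ "r0 + 1"]) (auto simp: Wf_def sig2)
  moreover have "r0 * 1 * (U r0 * (Le1 - LeK) - w r0 * LeU) = Wf r0"
    unfolding Wr0 jumps by (simp add: algebra_simps)
  ultimately have r: "(Wf \<longlongrightarrow> Wf r0) (at_right r0)" using tendsto_cong by fastforce
  show ?thesis using l r True unfolding isCont_def filterlim_at_split by simp
qed

lemma near_R_bound:
  assumes rad: "\<And>r. r \<in> {r0<..<R} \<Longrightarrow> radial_eq \<kappa> r0 \<alpha> L c f r"
    and lim: "(f \<longlongrightarrow> 0) (at_left R)" and c: "c \<ge> 0"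
  shows "\<exists>a B. r0 < a \<and> a < R \<and> (\<forall>r\<in>{a..<R}. \<bar>deriv f r\<bar> \<le> B)"
proof -
  have "eventually (\<lambda>x. \<bar>f x\<bar> < 1) (at_left R)"
    using order_tendstoD(2)[OF tendsto_rabs[OF lim], of 1] by simp
  then obtain b where b: "b < R" "\<And>y. b < y \<Longrightarrow> y < R \<Longrightarrow> \<bar>f y\<bar> < 1"
    unfolding eventually_at_left_field by auto
  define a where "a = max ((b + R)/2) ((r0 + R)/2)"
  have a: "r0 < a" "a < R" "b < a" using b r0R by (auto simp: a_def max_def)
  have a0: "0 < a" using a r0pos by simp
  have "\<exists>B. \<forall>r\<in>{a..<R}. \<bar>deriv f r\<bar> \<le> B"
  proof (rule dbound[where ddf="deriv (deriv f)" and D="\<bar>L\<bar> * R + c / a"])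
    fix r assume r: "r \<in> {a..<R}"
    then have ri: "r \<in> {r0<..<R}" using a by auto
    note o = ode_piece2[OF rad[OF ri] ri]
    show "(f has_real_derivative deriv f r) (at r) \<and> (deriv f has_real_derivative deriv (deriv f) r) (at r)"
      using o by blast
    have rp: "r > 0" using ri r0pos by auto
    have "r * deriv (deriv f) r + deriv f r = (c / r - L * r) * f r"
      using o rp by (simp add: field_simps power2_eq_square)
    then have "\<bar>r * deriv (deriv f) r + deriv f r\<bar> = \<bar>c / r - L * r\<bar> * \<bar>f r\<bar>" by (simp add: abs_mult)
    also have "\<dots> \<le> \<bar>c / r - L * r\<bar> * 1"
      using b(2)[of r] r a by (intro mult_left_mono) auto
    also have "\<bar>c / r - L * r\<bar> \<le> c / r + \<bar>L\<bar> * r"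
    proof -
      have "\<bar>c / r - L * r\<bar> \<le> \<bar>c / r\<bar> + \<bar>L * r\<bar>" by (rule abs_triangle_ineq4)
      moreover have "\<bar>c / r\<bar> = c / r" using c rp by simp
      moreover have "\<bar>L * r\<bar> = \<bar>L\<bar> * r" using rp by (simp add: abs_mult)
      ultimately show ?thesis by simp
    qed
    also have "c / r \<le> c / a" using r c a0 by (intro divide_left_mono) auto
    also have "\<bar>L\<bar> * r \<le> \<bar>L\<bar> * R" using r by (intro mult_left_mono) auto
    finally show "\<bar>r * deriv (deriv f) r + deriv f r\<bar> \<le> \<bar>L\<bar> * R + c / a" by simp
  qed (use a0 a in auto)
  then show ?thesis using a by blast
qed

lemma WfR: "(Wf \<longlongrightarrow> 0) (at_left R)"
proof -
  have UR: "(U \<longlongrightarrow> 0) (at_left R)"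
    using continuous_on_Icc_at_leftD[OF U_cont] U_R r0pos r0R by auto
  obtain aU BU where bU: "r0 < aU" "aU < R" "\<forall>r\<in>{aU..<R}. \<bar>deriv U r\<bar> \<le> BU"
    using near_R_bound[of 0 U] U_rad UR by auto
  obtain a1 B1 where b1: "r0 < a1" "a1 < R" "\<forall>r\<in>{a1..<R}. \<bar>deriv Z1 r\<bar> \<le> B1"
    using near_R_bound[of 1 Z1] Z1rad zfacts(11)[OF zp1] by auto
  obtain aK BK where bK: "r0 < aK" "aK < R" "\<forall>r\<in>{aK..<R}. \<bar>deriv ZK r\<bar> \<le> BK"
    using near_R_bound[of "real k ^ 2" ZK] ZKrad zfacts(11)[OF zpk] by auto
  define a where "a = max aU (max a1 aK)"
  have a: "r0 < a" "a < R" using bU b1 bK by (auto simp: a_def)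
  define G where "G r = R * (\<bar>U r\<bar> * (B1 + BK) + \<bar>w r\<bar> * BU)" for r
  have "(G \<longlongrightarrow> R * (\<bar>0\<bar> * (B1 + BK) + \<bar>0\<bar> * BU)) (at_left R)"
    unfolding G_def by (intro tendsto_intros UR wR(2))
  then have G0: "(G \<longlongrightarrow> 0) (at_left R)" by simp
  have "eventually (\<lambda>r. norm (Wf r) \<le> G r) (at_left R)"
    using eventually_at_left_real[OF a(2)]
  proof (rule eventually_mono)
    fix r assume r: "r \<in> {a<..<R}"
    then have rn: "r \<noteq> r0" "\<not> r < r0" "r > 0" using a r0pos by auto
    have Wr: "Wf r = r * (U r * dw r - w r * deriv U r)"
      using rn by (simp add: Wf_def sig2)
    have bd1: "\<bar>deriv Z1 r\<bar> \<le> B1" "\<bar>deriv ZK r\<bar> \<le> BK" "\<bar>deriv U r\<bar> \<le> BU"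
      using bU(3) b1(3) bK(3) r by (auto simp: a_def)
    have "\<bar>dw r\<bar> \<le> B1 + BK" unfolding dw_def using bd1 by linarith
    then have x1: "\<bar>U r\<bar> * \<bar>dw r\<bar> \<le> \<bar>U r\<bar> * (B1 + BK)" by (intro mult_left_mono) auto
    have x2: "\<bar>w r\<bar> * \<bar>deriv U r\<bar> \<le> \<bar>w r\<bar> * BU" using bd1 by (intro mult_left_mono) auto
    have "\<bar>U r * dw r - w r * deriv U r\<bar> \<le> \<bar>U r\<bar> * (B1 + BK) + \<bar>w r\<bar> * BU"
      using x1 x2 abs_triangle_ineq4[of "U r * dw r" "w r * deriv U r"] by (simp add: abs_mult)
    then have "r * \<bar>U r * dw r - w r * deriv U r\<bar> \<le> R * (\<bar>U r\<bar> * (B1 + BK) + \<bar>w r\<bar> * BU)"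
      using r rn by (intro mult_mono) auto
    then show "norm (Wf r) \<le> G r" unfolding Wr G_def using rn by (simp add: abs_mult)
  qed
  then show ?thesis using Lim_null_comparison G0 by blast
qed

end



context setting begin

lemma k2: "real k ^ 2 \<ge> 1"
  using kge by (simp add: one_le_power)

lemma sigma_pos: "sigma \<kappa> r0 \<alpha> t > 0"
  using s1pos by (cases "t < r0") (auto simp: sig1 sig2)

lemma Wf_dec:
  assumes xy: "0 < x" "x < y" "y < R" and neg: "\<And>t. x < t \<Longrightarrow> t < y \<Longrightarrow> w t < 0"
  shows "Wf y < Wf x"
proof (rule dec_except[where g'="\<lambda>t. U t * (real k ^ 2 * w t - (real k ^ 2 - 1) * Z1 t) / t" and p=r0 and g=Wf and x=x and y=y])
  show "continuous_on {x..y} Wf"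
  proof (rule continuous_at_imp_continuous_on, intro ballI)
    fix t assume "t \<in> {x..y}" then show "isCont Wf t" using xy by (intro Wf_isCont) auto
  qed
  fix t assume t: "x < t" "t < y" "t \<noteq> r0"
  then have ti: "t \<in> {0<..<R} - {r0}" using xy by auto
  show "(Wf has_real_derivative U t * (real k ^ 2 * w t - (real k ^ 2 - 1) * Z1 t) / t) (at t) \<and>
        U t * (real k ^ 2 * w t - (real k ^ 2 - 1) * Z1 t) / t < 0"
  proof
    show "(Wf has_real_derivative U t * (real k ^ 2 * w t - (real k ^ 2 - 1) * Z1 t) / t) (at t)"
      by (rule Wf_deriv[OF ti])
    have Up: "U t > 0" using ti by (intro U_pos) auto
    have wn: "w t < 0" using neg t by auto
    have z: "Z1 t \<ge> 0" using z1nn ti by auto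
    have "real k ^ 2 > 0" using k2 by linarith
    then have "real k ^ 2 * w t < 0" using wn by (rule mult_pos_neg)
    moreover have "(real k ^ 2 - 1) * Z1 t \<ge> 0" using z k2 by simp
    ultimately have "real k ^ 2 * w t - (real k ^ 2 - 1) * Z1 t < 0" by linarith
    then have "U t * (real k ^ 2 * w t - (real k ^ 2 - 1) * Z1 t) < 0" using Up by (simp add: mult_pos_neg)
    then show "U t * (real k ^ 2 * w t - (real k ^ 2 - 1) * Z1 t) / t < 0" using ti by (simp add: divide_neg_pos)
  qed
qed (use xy in auto)

definition "v t = w t / U t"

lemma v_deriv:
  assumes t: "t \<in> {0<..<R} - {r0}"
  shows "(v has_real_derivative (dw t * U t - w t * deriv U t) / (U t * U t)) (at t)"
proof -
  have "(U has_real_derivative deriv U t) (at t)" using U_rad[OF pieces_iff[OF t]] unfolding radial_eq_def by blast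
  moreover have "U t \<noteq> 0" using U_pos[of t] t by auto
  ultimately show ?thesis unfolding v_def[abs_def] by (intro DERIV_divide w_deriv t)
qed

lemma v_cont: assumes "0 \<le> x" "y < R" shows "continuous_on {x..y} v"
  unfolding v_def[abs_def]
proof (rule continuous_on_divide)
  show "continuous_on {x..y} w" by (rule w_cont_on[OF assms])
  show "continuous_on {x..y} U" by (rule continuous_on_subset[OF U_cont]) (use assms in auto)
  show "\<forall>t\<in>{x..y}. U t \<noteq> 0"
  proof
    fix t assume "t \<in> {x..y}"
    then have "t \<in> {0..<R}" using assms by auto
    from U_pos[OF this] show "U t \<noteq> 0" by simp
  qed
qed

lemma v_sign:
  assumes t: "t \<in> {0<..<R} - {r0}"
  shows "(dw t * U t - w t * deriv U t) / (U t * U t) > 0 \<longleftrightarrow> Wf t > 0"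
    and "(dw t * U t - w t * deriv U t) / (U t * U t) < 0 \<longleftrightarrow> Wf t < 0"
proof -
  define A where "A = dw t * U t - w t * deriv U t"
  define P where "P = U t * U t"
  define T where "T = t * sigma \<kappa> r0 \<alpha> t"
  have U: "P > 0" using U_pos[of t] t by (auto simp: P_def)
  have Wt: "Wf t = T * A"
    using t by (simp add: Wf_def A_def T_def algebra_simps)
  have ts: "T > 0" using t sigma_pos by (auto simp: T_def)
  have a1: "A / P > 0 \<longleftrightarrow> A > 0" using U by (simp add: zero_less_divide_iff)
  have a2: "T * A > 0 \<longleftrightarrow> A > 0" using ts by (simp add: zero_less_mult_iff)
  have a3: "A / P < 0 \<longleftrightarrow> A < 0" using U by (simp add: divide_less_0_iff)
  have a4: "T * A < 0 \<longleftrightarrow> A < 0" using ts by (simp add: mult_less_0_iff)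
  show "(dw t * U t - w t * deriv U t) / (U t * U t) > 0 \<longleftrightarrow> Wf t > 0"
    using a1 a2 unfolding Wt A_def[symmetric] P_def[symmetric] by simp
  show "(dw t * U t - w t * deriv U t) / (U t * U t) < 0 \<longleftrightarrow> Wf t < 0"
    using a3 a4 unfolding Wt A_def[symmetric] P_def[symmetric] by simp
qed

lemma v_inc:
  assumes xy: "0 \<le> x" "x < y" "y < R" and pos: "\<And>t. x < t \<Longrightarrow> t < y \<Longrightarrow> t \<noteq> r0 \<Longrightarrow> Wf t > 0"
  shows "v x < v y"
proof (rule inc_except[where g'="\<lambda>t. (dw t * U t - w t * deriv U t) / (U t * U t)" and p=r0 and g=v and x=x and y=y])
  show "continuous_on {x..y} v" by (rule v_cont) (use xy in auto)
  fix t assume t: "x < t" "t < y" "t \<noteq> r0"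
  then have ti: "t \<in> {0<..<R} - {r0}" using xy by auto
  show "(v has_real_derivative (dw t * U t - w t * deriv U t) / (U t * U t)) (at t) \<and>
        (dw t * U t - w t * deriv U t) / (U t * U t) > 0"
    using v_deriv[OF ti] v_sign(1)[OF ti] pos[OF t] by blast
qed (use xy in auto)

lemma v_dec:
  assumes xy: "0 \<le> x" "x < y" "y < R" and neg: "\<And>t. x < t \<Longrightarrow> t < y \<Longrightarrow> t \<noteq> r0 \<Longrightarrow> Wf t < 0"
  shows "v y < v x"
proof (rule dec_except[where g'="\<lambda>t. (dw t * U t - w t * deriv U t) / (U t * U t)" and p=r0 and g=v and x=x and y=y])
  show "continuous_on {x..y} v" by (rule v_cont) (use xy in auto)
  fix t assume t: "x < t" "t < y" "t \<noteq> r0"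
  then have ti: "t \<in> {0<..<R} - {r0}" using xy by auto
  show "(v has_real_derivative (dw t * U t - w t * deriv U t) / (U t * U t)) (at t) \<and>
        (dw t * U t - w t * deriv U t) / (U t * U t) < 0"
    using v_deriv[OF ti] v_sign(2)[OF ti] neg[OF t] by blast
qed (use xy in auto)

lemma neg_nbhd:
  assumes "x \<in> {0<..<R}" "w x < 0"
  shows "\<exists>d>0. \<forall>y. \<bar>y - x\<bar> < d \<longrightarrow> w y < 0"
proof -
  have c: "(w \<longlongrightarrow> w x) (at x)" using w_isCont[OF assms(1)] unfolding isCont_def .
  have "eventually (\<lambda>y. w y < 0) (at x)"
    using order_tendstoD(2)[OF c assms(2)] .
  then obtain d where d: "d > 0" "\<And>y. y \<noteq> x \<Longrightarrow> dist y x < d \<Longrightarrow> w y < 0"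
    unfolding eventually_at by auto
  show ?thesis
  proof (intro exI[of _ d] conjI allI impI)
    fix y assume "\<bar>y - x\<bar> < d"
    then show "w y < 0" using d assms(2) by (cases "y = x") (auto simp: dist_real_def)
  qed (use d in auto)
qed

lemma v_val: "t \<in> {0..<R} \<Longrightarrow> v t \<ge> 0 \<longleftrightarrow> w t \<ge> 0"
  using U_pos[of t] unfolding v_def by (simp add: zero_le_divide_iff)

lemma v_val_neg: "t \<in> {0..<R} \<Longrightarrow> v t < 0 \<longleftrightarrow> w t < 0"
  using U_pos[of t] unfolding v_def by (simp add: divide_less_0_iff)

lemma w_nonneg:
  assumes r1: "r1 \<in> {0<..<R}"
  shows "w r1 \<ge> 0"
proof (rule ccontr)
  assume "\<not> w r1 \<ge> 0"
  then have neg: "w r1 < 0" by simp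
  define S where "S = {s. r1 \<le> s \<and> s \<le> R \<and> 0 \<le> w s}"
  define b where "b = Inf S"
  have RS: "R \<in> S" using wR(1) r1 unfolding S_def by auto
  have Sne: "S \<noteq> {}" using RS by auto
  have bddS: "bdd_below S" unfolding S_def by (rule bdd_belowI[of _ r1]) auto
  have b_le: "b \<le> s" if "s \<in> S" for s unfolding b_def by (rule cInf_lower[OF that bddS])
  have bR: "b \<le> R" by (rule b_le[OF RS])
  have rb: "r1 \<le> b" unfolding b_def by (rule cInf_greatest[OF Sne]) (auto simp: S_def)
  have bneg: "w s < 0" if "r1 \<le> s" "s < b" for s
  proof (rule ccontr)
    assume "\<not> w s < 0"
    then have "s \<in> S" using that bR unfolding S_def by auto
    then show False using b_le that by fastforce
  qed
  have wb: "w b \<ge> 0"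
  proof (rule ccontr)
    assume "\<not> w b \<ge> 0"
    then have wbn: "w b < 0" by simp
    then have "b \<noteq> R" using wR(1) by auto
    then have bi: "b \<in> {0<..<R}" using bR rb r1 by auto
    obtain d where d: "d > 0" "\<And>y. \<bar>y - b\<bar> < d \<Longrightarrow> w y < 0" using neg_nbhd[OF bi wbn] by auto
    have "b + d \<le> Inf S"
    proof (rule cInf_greatest[OF Sne])
      fix s assume s: "s \<in> S"
      have "b \<le> s" by (rule b_le[OF s])
      moreover have "w s \<ge> 0" using s unfolding S_def by auto
      ultimately show "b + d \<le> s" using d(2)[of s] by force
    qed
    then show False using d unfolding b_def by simp
  qed
  have r1b: "r1 < b" using rb wb neg by (cases "r1 = b") auto
  have Wr1: "Wf r1 > 0"
  proof (cases "b < R")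
    case True
    show ?thesis
    proof (rule ccontr)
      assume "\<not> Wf r1 > 0"
      then have W0: "Wf r1 \<le> 0" by simp
      have "v b < v r1"
      proof (rule v_dec)
        fix t assume t: "r1 < t" "t < b" "t \<noteq> r0"
        have "Wf t < Wf r1" by (rule Wf_dec) (use t r1 True bneg in auto)
        then show "Wf t < 0" using W0 by simp
      qed (use r1 r1b True in auto)
      moreover have "v b \<ge> 0" using v_val[of b] wb True rb r1 by auto
      moreover have "v r1 < 0" using v_val_neg[of r1] neg r1 by auto
      ultimately show False by simp
    qed
  next
    case False
    then have bR': "b = R" using bR by simp
    define s where "s = (r1 + R) / 2"
    have s: "r1 < s" "s < R" using r1 by (auto simp: s_def)
    have "eventually (\<lambda>t. Wf t \<le> Wf s) (at_left R)"
    proof (rule eventually_mono[OF eventually_at_left_real[OF s(2)]])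
      fix t assume t: "t \<in> {s<..<R}"
      have "Wf t < Wf s" by (rule Wf_dec) (use t s r1 bR' bneg in auto)
      then show "Wf t \<le> Wf s" by simp
    qed
    then have "0 \<le> Wf s" using tendsto_le[OF trivial_limit_at_left_real tendsto_const WfR] by blast
    moreover have "Wf s < Wf r1" by (rule Wf_dec) (use s r1 bR' bneg in auto)
    ultimately show ?thesis by simp
  qed
  define S' where "S' = {s. 0 \<le> s \<and> s \<le> r1 \<and> 0 \<le> w s}"
  define a where "a = Sup S'"
  have zS: "0 \<in> S'" using w0(1) r1 unfolding S'_def by auto
  have Sne': "S' \<noteq> {}" using zS by auto
  have bddS': "bdd_above S'" unfolding S'_def by (rule bdd_aboveI[of _ r1]) auto
  have a_ge: "s \<le> a" if "s \<in> S'" for s unfolding a_def by (rule cSup_upper[OF that bddS'])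
  have a0: "0 \<le> a" by (rule a_ge[OF zS])
  have ar: "a \<le> r1" unfolding a_def by (rule cSup_least[OF Sne']) (auto simp: S'_def)
  have aneg: "w s < 0" if "a < s" "s \<le> r1" for s
  proof (rule ccontr)
    assume "\<not> w s < 0"
    then have "s \<in> S'" using that a0 unfolding S'_def by auto
    then show False using a_ge that by fastforce
  qed
  have wa: "w a \<ge> 0"
  proof (rule ccontr)
    assume "\<not> w a \<ge> 0"
    then have wan: "w a < 0" by simp
    then have "a \<noteq> 0" using w0(1) by auto
    then have ai: "a \<in> {0<..<R}" using a0 ar r1 by auto
    obtain d where d: "d > 0" "\<And>y. \<bar>y - a\<bar> < d \<Longrightarrow> w y < 0" using neg_nbhd[OF ai wan] by auto
    have "Sup S' \<le> a - d"
    proof (rule cSup_least[OF Sne'])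
      fix s assume s: "s \<in> S'"
      have "s \<le> a" by (rule a_ge[OF s])
      moreover have "w s \<ge> 0" using s unfolding S'_def by auto
      ultimately show "s \<le> a - d" using d(2)[of s] by force
    qed
    then show False using d unfolding a_def by simp
  qed
  have ar1: "a < r1" using ar wa neg by (cases "a = r1") auto
  have "v a < v r1"
  proof (rule v_inc)
    fix t assume t: "a < t" "t < r1" "t \<noteq> r0"
    have "Wf r1 < Wf t" by (rule Wf_dec) (use t r1 a0 aneg in auto)
    then show "Wf t > 0" using Wr1 by simp
  qed (use a0 ar1 r1 in auto)
  moreover have "v a \<ge> 0" using v_val[of a] wa a0 ar r1 by auto
  moreover have "v r1 < 0" using v_val_neg[of r1] neg r1 by auto
  ultimately show False by simp
qed

lemma main_result:
  "(\<forall>r \<in> {0<..<R} - {r0}. ZK r \<le> Z1 r) \<and> omega \<kappa> r0 U ZK \<ge> omega \<kappa> r0 U Z1"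
proof
  show "\<forall>r \<in> {0<..<R} - {r0}. ZK r \<le> Z1 r"
  proof
    fix r assume r: "r \<in> {0<..<R} - {r0}"
    then have "w r \<ge> 0" by (intro w_nonneg) auto
    then show "ZK r \<le> Z1 r" using w_eq[of r] r by auto
  qed
  have "w r0 \<ge> 0" using r0pos r0R by (intro w_nonneg) auto
  then have "lim_int ZK r0 \<le> lim_int Z1 r0" using w_r0 by simp
  moreover have "r0 * \<kappa> * U r0 / 2 \<ge> 0" using r0pos kap U_r0_pos by simp
  ultimately have "r0 * \<kappa> * U r0 / 2 * (- lim_int (deriv U) r0 - lim_int Z1 r0)
     \<le> r0 * \<kappa> * U r0 / 2 * (- lim_int (deriv U) r0 - lim_int ZK r0)"
    by (intro mult_left_mono) auto
  then show "omega \<kappa> r0 U ZK \<ge> omega \<kappa> r0 U Z1" unfolding omega_def by simp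
qed

end


theorem lemma6p6:
  fixes \<kappa> m0 r0 R \<alpha>bar :: real
    and lam :: "real \<Rightarrow> real"
    and u :: "real \<Rightarrow> real \<Rightarrow> real"
    and z :: "nat \<Rightarrow> real \<Rightarrow> real \<Rightarrow> real"
  assumes "0 < m0" and "m0 < \<kappa>" and "0 < r0" and "r0 < R"
    and "\<kappa> * (pi * r0\<^sup>2) = m0 * (pi * R\<^sup>2)"
    and "\<alpha>bar > 0"
    and "\<forall>\<alpha> \<in> {0..\<alpha>bar}. principal_radial_eigenpair \<kappa> r0 R \<alpha> (lam \<alpha>) (u \<alpha>)"
    and "\<forall>\<alpha> \<in> {0..\<alpha>bar}. \<forall>k::nat. k \<ge> 1 \<longrightarrow>
           z_problem \<kappa> r0 R \<alpha> (lam \<alpha>) (u \<alpha>) k (z k \<alpha>)"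
    and "\<forall>\<alpha> \<in> {0..\<alpha>bar}. \<forall>r \<in> {0<..<R} - {r0}. 0 \<le> z 1 \<alpha> r"
  shows "\<forall>\<alpha> \<in> {0..\<alpha>bar}. \<forall>k::nat. k \<ge> 1 \<longrightarrow>
           (\<forall>r \<in> {0<..<R} - {r0}. z k \<alpha> r \<le> z 1 \<alpha> r) \<and>
           omega \<kappa> r0 (u \<alpha>) (z k \<alpha>) \<ge> omega \<kappa> r0 (u \<alpha>) (z 1 \<alpha>)"
proof (intro ballI allI impI)
  fix \<alpha> :: real and k :: nat
  assume \<alpha>: "\<alpha> \<in> {0..\<alpha>bar}" and k: "k \<ge> 1"
  interpret setting \<kappa> r0 R \<alpha> "lam \<alpha>" "u \<alpha>" "z 1 \<alpha>" "z k \<alpha>" k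
  proof
    show "0 < \<kappa>" using assms(1,2) by simp
    show "0 < r0" "r0 < R" using assms(3,4) .
    show "0 \<le> \<alpha>" using \<alpha> by simp
    show "1 \<le> k" using k .
    show "principal_radial_eigenpair \<kappa> r0 R \<alpha> (lam \<alpha>) (u \<alpha>)" using assms(7) \<alpha> by blast
    show "z_problem \<kappa> r0 R \<alpha> (lam \<alpha>) (u \<alpha>) 1 (z 1 \<alpha>)" using assms(8) \<alpha> by blast
    show "z_problem \<kappa> r0 R \<alpha> (lam \<alpha>) (u \<alpha>) k (z k \<alpha>)" using assms(8) \<alpha> k by blast
    show "\<forall>r\<in>{0<..<R} - {r0}. 0 \<le> z 1 \<alpha> r" using assms(9) \<alpha> by blast
  qed
  show "(\<forall>r \<in> {0<..<R} - {r0}. z k \<alpha> r \<le> z 1 \<alpha> r) \<and>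
           omega \<kappa> r0 (u \<alpha>) (z k \<alpha>) \<ge> omega \<kappa> r0 (u \<alpha>) (z 1 \<alpha>)"
    by (rule main_result)
qed

end
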